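(* Let $V$ be a fine diffeological vector space. Then $T_0(V)\cong V$ as diffeological vector spaces.
   Context: A diffeological space is a set with, for every open subset $U$ of every $\mathbb{R}^n$, a set of maps $U\to X$ called plots, containing constants, closed under precomposition with smooth maps, and satisfying the sheaf condition; smooth maps send plots to plots. A diffeological vector space is a vector space with a diffeology making addition and scalar multiplication smooth; the fine diffeology is the smallest such diffeology on a given vector space, and $V$ is fine if it carries it. The internal tangent space $T_x(X)$ is the colimit in real vector spaces, over plots $p:U\to X$ with $U$ a connected open neighbourhood of $0$ in some $\mathbb{R}^n$ and $p(0)=x$ (morphisms: smooth $f:U\to U'$ with $f(0)=0$ and $q\circ f=p$), of $p\mapsto T_0(U)$, $f\mapsto f_*$. On $TX=\coprod_x T_x(X)$, Hector's diffeology is generated by the maps $Tf:TU\to TX$ for plots $f:U\to X$ with $U$ connected (sending $T_u(U)\cong T_0(U-u)$ to $T_{f(u)}(X)$ via the plot $w\mapsto f(w+u)$), and the dvs diffeology is the smallest diffeology containing Hector's for which fibrewise addition, scalar multiplication and the zero section $X\to TX$ are smooth. $T_x(X)$ is given the sub-diffeology of either; for a diffeological group (in particular a diffeological vector space) these two diffeologies on $T_x$ coincide, and $T_0(V)$ denotes $T_0(V)$ with this common diffeology. *)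

theory Defs
  imports "HOL-Analysis.Derivative"
begin

section \<open>Euclidean spaces R^n, encoded inside nat => real\<close>

type_synonym rn = "nat \<Rightarrow> real"

definition orig :: rn where "orig = (\<lambda>_. 0)"

definition Rn :: "nat \<Rightarrow> rn set" where
  "Rn n = {x. \<forall>i\<ge>n. x i = 0}"

definition open_Rn :: "nat \<Rightarrow> rn set \<Rightarrow> bool" where
  "open_Rn n U \<longleftrightarrow> U \<subseteq> Rn n \<and>
     (\<forall>x\<in>U. \<exists>e>0. \<forall>y\<in>Rn n. (\<forall>i<n. \<bar>y i - x i\<bar> < e) \<longrightarrow> y \<in> U)"

definition connected_Rn :: "nat \<Rightarrow> rn set \<Rightarrow> bool" where
  "connected_Rn n U \<longleftrightarrow> \<not> (\<exists>A B. open_Rn n A \<and> open_Rn n B \<and> A \<noteq> {} \<and> B \<noteq> {}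
       \<and> A \<inter> B = {} \<and> A \<union> B = U)"

definition cont_Rn :: "nat \<Rightarrow> rn set \<Rightarrow> (rn \<Rightarrow> real) \<Rightarrow> bool" where
  "cont_Rn n U g \<longleftrightarrow> (\<forall>x\<in>U. \<forall>e>0. \<exists>d>0. \<forall>y\<in>U.
      (\<forall>i<n. \<bar>y i - x i\<bar> < d) \<longrightarrow> \<bar>g y - g x\<bar> < e)"

definition pd :: "nat \<Rightarrow> (rn \<Rightarrow> real) \<Rightarrow> rn \<Rightarrow> real" where
  "pd i g x = deriv (\<lambda>t. g (x(i := x i + t))) 0"

primrec iter_pd :: "nat list \<Rightarrow> (rn \<Rightarrow> real) \<Rightarrow> rn \<Rightarrow> real" where
  "iter_pd [] g = g"
| "iter_pd (i # js) g = pd i (iter_pd js g)"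

definition smooth_real :: "nat \<Rightarrow> rn set \<Rightarrow> (rn \<Rightarrow> real) \<Rightarrow> bool" where
  "smooth_real n U g \<longleftrightarrow> (\<forall>js. set js \<subseteq> {..<n} \<longrightarrow>
      cont_Rn n U (iter_pd js g) \<and>
      (\<forall>i<n. \<forall>x\<in>U. \<exists>D. ((\<lambda>t. iter_pd js g (x(i := x i + t))) has_real_derivative D) (at 0)))"

definition smooth_map :: "nat \<Rightarrow> rn set \<Rightarrow> nat \<Rightarrow> rn set \<Rightarrow> (rn \<Rightarrow> rn) \<Rightarrow> bool" where
  "smooth_map n U m W f \<longleftrightarrow> (\<forall>u\<in>U. f u \<in> W) \<and> W \<subseteq> Rn m \<and>
      (\<forall>j<m. smooth_real n U (\<lambda>u. f u j))"

definition dmap :: "nat \<Rightarrow> (rn \<Rightarrow> rn) \<Rightarrow> rn \<Rightarrow> rn" where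
  "dmap n f v = (\<lambda>j. \<Sum>i<n. pd i (\<lambda>u. f u j) orig * v i)"

text \<open>A diffeology on carrier X: D n U p means p : U -> X is a plot, U open in R^n.
  Plots are regarded as functions on U (values outside U are irrelevant).\<close>
definition diffeology :: "'a set \<Rightarrow> (nat \<Rightarrow> rn set \<Rightarrow> (rn \<Rightarrow> 'a) \<Rightarrow> bool) \<Rightarrow> bool" where
  "diffeology X D \<longleftrightarrow>
     (\<forall>n U p. D n U p \<longrightarrow> open_Rn n U \<and> (\<forall>u\<in>U. p u \<in> X)) \<and>
     (\<forall>n U p q. D n U p \<and> (\<forall>u\<in>U. q u = p u) \<longrightarrow> D n U q) \<and>
     (\<forall>n U x. open_Rn n U \<and> x \<in> X \<longrightarrow> D n U (\<lambda>_. x)) \<and>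
     (\<forall>n U p m W f. D n U p \<and> open_Rn m W \<and> smooth_map m W n U f \<longrightarrow> D m W (p \<circ> f)) \<and>
     (\<forall>n U p. open_Rn n U \<and> (\<forall>u\<in>U. p u \<in> X) \<and>
        (\<forall>u\<in>U. \<exists>W. open_Rn n W \<and> u \<in> W \<and> W \<subseteq> U \<and> D n W p) \<longrightarrow> D n U p)"

text \<open>Diffeological vector space structure on a real vector space type (carrier UNIV):
  addition V x V -> V and scalar multiplication R x V -> V are smooth for the
  product diffeologies (plots of a product = pairs of plots; plots of R = smooth functions).\<close>
definition dvs_diffeology :: "(nat \<Rightarrow> rn set \<Rightarrow> (rn \<Rightarrow> 'v::real_vector) \<Rightarrow> bool) \<Rightarrow> bool" where
  "dvs_diffeology D \<longleftrightarrow> diffeology UNIV D \<and>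
     (\<forall>n U p q. D n U p \<and> D n U q \<longrightarrow> D n U (\<lambda>u. p u + q u)) \<and>
     (\<forall>n U r p. open_Rn n U \<and> smooth_real n U r \<and> D n U p \<longrightarrow> D n U (\<lambda>u. r u *\<^sub>R p u))"

definition fine_diffeology :: "(nat \<Rightarrow> rn set \<Rightarrow> (rn \<Rightarrow> 'v::real_vector) \<Rightarrow> bool) \<Rightarrow> bool" where
  "fine_diffeology D \<longleftrightarrow> dvs_diffeology D \<and>
     (\<forall>D'. dvs_diffeology D' \<longrightarrow> (\<forall>n U p. D n U p \<longrightarrow> D' n U p))"

section \<open>Internal tangent space as a colimit (standard construction)\<close>

text \<open>Objects of the indexing category: (n, U, p).\<close>
type_synonym 'a pidx = "nat \<times> rn set \<times> (rn \<Rightarrow> 'a)"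

definition centred :: "(nat \<Rightarrow> rn set \<Rightarrow> (rn \<Rightarrow> 'a) \<Rightarrow> bool) \<Rightarrow> 'a \<Rightarrow> 'a pidx \<Rightarrow> bool" where
  "centred D x c \<longleftrightarrow> (case c of (n, U, p) \<Rightarrow>
      D n U p \<and> connected_Rn n U \<and> orig \<in> U \<and> p orig = x)"

definition tmorph :: "(nat \<Rightarrow> rn set \<Rightarrow> (rn \<Rightarrow> 'a) \<Rightarrow> bool) \<Rightarrow> 'a \<Rightarrow> 'a pidx \<Rightarrow> 'a pidx
      \<Rightarrow> (rn \<Rightarrow> rn) \<Rightarrow> bool" where
  "tmorph D x c c' f \<longleftrightarrow> centred D x c \<and> centred D x c' \<and>
     (case c of (n, U, p) \<Rightarrow> case c' of (n', U', p') \<Rightarrow>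
        smooth_map n U n' U' f \<and> f orig = orig \<and> (\<forall>u\<in>U. p' (f u) = p u))"

text \<open>Direct sum of the T_0(U) = R^n over the objects.\<close>
definition DS :: "(nat \<Rightarrow> rn set \<Rightarrow> (rn \<Rightarrow> 'a) \<Rightarrow> bool) \<Rightarrow> 'a \<Rightarrow> ('a pidx \<Rightarrow> rn) set" where
  "DS D x = {s. finite {c. s c \<noteq> orig} \<and> (\<forall>c. s c \<noteq> orig \<longrightarrow> centred D x c)
               \<and> (\<forall>c. s c \<in> Rn (fst c))}"

definition ds_add :: "('a pidx \<Rightarrow> rn) \<Rightarrow> ('a pidx \<Rightarrow> rn) \<Rightarrow> ('a pidx \<Rightarrow> rn)" where
  "ds_add s t = (\<lambda>c i. s c i + t c i)"

definition ds_scale :: "real \<Rightarrow> ('a pidx \<Rightarrow> rn) \<Rightarrow> ('a pidx \<Rightarrow> rn)" where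
  "ds_scale r s = (\<lambda>c i. r * s c i)"

definition ds_sub :: "('a pidx \<Rightarrow> rn) \<Rightarrow> ('a pidx \<Rightarrow> rn) \<Rightarrow> ('a pidx \<Rightarrow> rn)" where
  "ds_sub s t = (\<lambda>c i. s c i - t c i)"

definition ds_zero :: "'a pidx \<Rightarrow> rn" where
  "ds_zero = (\<lambda>c. orig)"

definition delta :: "'a pidx \<Rightarrow> rn \<Rightarrow> ('a pidx \<Rightarrow> rn)" where
  "delta c v = (\<lambda>c'. if c' = c then v else orig)"

definition ds_subspace :: "('a pidx \<Rightarrow> rn) set \<Rightarrow> bool" where
  "ds_subspace S \<longleftrightarrow> ds_zero \<in> S \<and> (\<forall>s\<in>S. \<forall>t\<in>S. ds_add s t \<in> S) \<and>
     (\<forall>r. \<forall>s\<in>S. ds_scale r s \<in> S)"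

definition REL :: "(nat \<Rightarrow> rn set \<Rightarrow> (rn \<Rightarrow> 'a) \<Rightarrow> bool) \<Rightarrow> 'a \<Rightarrow> ('a pidx \<Rightarrow> rn) set" where
  "REL D x = \<Inter>{S. ds_subspace S \<and>
      {ds_sub (delta c v) (delta c' (dmap (fst c) f v)) | c c' f v.
          tmorph D x c c' f \<and> v \<in> Rn (fst c)} \<subseteq> S}"

definition tcls :: "(nat \<Rightarrow> rn set \<Rightarrow> (rn \<Rightarrow> 'a) \<Rightarrow> bool) \<Rightarrow> 'a \<Rightarrow> ('a pidx \<Rightarrow> rn)
     \<Rightarrow> ('a pidx \<Rightarrow> rn) set" where
  "tcls D x s = {t \<in> DS D x. ds_sub t s \<in> REL D x}"

definition Tsp :: "(nat \<Rightarrow> rn set \<Rightarrow> (rn \<Rightarrow> 'a) \<Rightarrow> bool) \<Rightarrow> 'a \<Rightarrow> ('a pidx \<Rightarrow> rn) set set" where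
  "Tsp D x = tcls D x ` DS D x"

definition T_add :: "(nat \<Rightarrow> rn set \<Rightarrow> (rn \<Rightarrow> 'a) \<Rightarrow> bool) \<Rightarrow> 'a \<Rightarrow> ('a pidx \<Rightarrow> rn) set
    \<Rightarrow> ('a pidx \<Rightarrow> rn) set \<Rightarrow> ('a pidx \<Rightarrow> rn) set" where
  "T_add D x A B = {t \<in> DS D x. \<exists>a\<in>A. \<exists>b\<in>B. ds_sub t (ds_add a b) \<in> REL D x}"

definition T_scale :: "(nat \<Rightarrow> rn set \<Rightarrow> (rn \<Rightarrow> 'a) \<Rightarrow> bool) \<Rightarrow> 'a \<Rightarrow> real
    \<Rightarrow> ('a pidx \<Rightarrow> rn) set \<Rightarrow> ('a pidx \<Rightarrow> rn) set" where
  "T_scale D x r A = {t \<in> DS D x. \<exists>a\<in>A. ds_sub t (ds_scale r a) \<in> REL D x}"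

definition tinj :: "(nat \<Rightarrow> rn set \<Rightarrow> (rn \<Rightarrow> 'a) \<Rightarrow> bool) \<Rightarrow> 'a \<Rightarrow> 'a pidx \<Rightarrow> rn
    \<Rightarrow> ('a pidx \<Rightarrow> rn) set" where
  "tinj D x c v = tcls D x (delta c v)"

definition TX :: "'a set \<Rightarrow> (nat \<Rightarrow> rn set \<Rightarrow> (rn \<Rightarrow> 'a) \<Rightarrow> bool) \<Rightarrow> ('a \<times> ('a pidx \<Rightarrow> rn) set) set" where
  "TX X D = {(x, A). x \<in> X \<and> A \<in> Tsp D x}"

text \<open>TU = U x R^n, encoded as an open subset of R^(2n): first n coordinates in U.\<close>
definition fstp :: "nat \<Rightarrow> rn \<Rightarrow> rn" where
  "fstp n w = (\<lambda>i. if i < n then w i else 0)"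

definition sndp :: "nat \<Rightarrow> rn \<Rightarrow> rn" where
  "sndp n w = (\<lambda>i. w (i + n))"

definition tanU :: "nat \<Rightarrow> rn set \<Rightarrow> rn set" where
  "tanU n U = {w \<in> Rn (2 * n). fstp n w \<in> U}"

text \<open>Tf : TU -> TX, sending T_u(U) = T_0(U - u) to T_{f u}(X) via the plot w |-> f (w + u).\<close>
definition Tmap :: "(nat \<Rightarrow> rn set \<Rightarrow> (rn \<Rightarrow> 'a) \<Rightarrow> bool) \<Rightarrow> nat \<Rightarrow> rn set \<Rightarrow> (rn \<Rightarrow> 'a)
     \<Rightarrow> rn \<Rightarrow> 'a \<times> ('a pidx \<Rightarrow> rn) set" where
  "Tmap D n U f w = (let u = fstp n w in
     (f u, tinj D (f u) (n, (\<lambda>y i. y i - u i) ` U, (\<lambda>y. f (\<lambda>i. y i + u i))) (sndp n w)))"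

definition hector :: "'a set \<Rightarrow> (nat \<Rightarrow> rn set \<Rightarrow> (rn \<Rightarrow> 'a) \<Rightarrow> bool)
     \<Rightarrow> nat \<Rightarrow> rn set \<Rightarrow> (rn \<Rightarrow> 'a \<times> ('a pidx \<Rightarrow> rn) set) \<Rightarrow> bool" where
  "hector X D m W q \<longleftrightarrow> (\<forall>D'. diffeology (TX X D) D' \<and>
      (\<forall>n U f. D n U f \<and> connected_Rn n U \<longrightarrow> D' (2 * n) (tanU n U) (Tmap D n U f))
      \<longrightarrow> D' m W q)"

definition T_diff :: "'a set \<Rightarrow> (nat \<Rightarrow> rn set \<Rightarrow> (rn \<Rightarrow> 'a) \<Rightarrow> bool) \<Rightarrow> 'a
     \<Rightarrow> nat \<Rightarrow> rn set \<Rightarrow> (rn \<Rightarrow> ('a pidx \<Rightarrow> rn) set) \<Rightarrow> bool" where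
  "T_diff X D x m W q \<longleftrightarrow> hector X D m W (\<lambda>w. (x, q w))"

end

theory Submission
  imports Defs
begin


definition bx :: "nat \<Rightarrow> rn \<Rightarrow> real \<Rightarrow> rn set" where
  "bx n x e = {y. \<forall>i<n. \<bar>y i - x i\<bar> < e}"

definition nbh :: "nat \<Rightarrow> rn set \<Rightarrow> rn \<Rightarrow> rn filter" where
  "nbh n U x = inf (INF e\<in>{0<..}. principal (bx n x e)) (principal U)"

lemma eventually_nbh:
  "eventually P (nbh n U x) \<longleftrightarrow> (\<exists>e>0. \<forall>y\<in>U. (\<forall>i<n. \<bar>y i - x i\<bar> < e) \<longrightarrow> P y)"
proof -
  have "eventually (\<lambda>y. y \<in> U \<longrightarrow> P y) (INF e\<in>{0<..}. principal (bx n x e))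
     \<longleftrightarrow> (\<exists>e\<in>{0<..}. eventually (\<lambda>y. y \<in> U \<longrightarrow> P y) (principal (bx n x e)))"
  proof (rule eventually_INF_base)
    fix a b :: real assume "a \<in> {0<..}" "b \<in> {0<..}"
    thus "\<exists>c\<in>{0<..}. principal (bx n x c) \<le> inf (principal (bx n x a)) (principal (bx n x b))"
      by (intro bexI[of _ "min a b"]) (auto simp: bx_def)
  qed simp
  thus ?thesis unfolding nbh_def eventually_inf_principal
    by (simp add: eventually_principal bx_def) (metis greaterThan_iff)
qed

lemma cont_Rn_tendsto:
  "cont_Rn n U g \<longleftrightarrow> (\<forall>x\<in>U. (g \<longlongrightarrow> g x) (nbh n U x))"
  unfolding cont_Rn_def tendsto_iff dist_real_def eventually_nbh by blast

lemma open_Rn_iff: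
  "open_Rn n U \<longleftrightarrow> U \<subseteq> Rn n \<and> (\<forall>x\<in>U. \<exists>e>0. \<forall>y\<in>Rn n. (\<forall>i<n. \<bar>y i - x i\<bar> < e) \<longrightarrow> y \<in> U)"
  by (simp add: open_Rn_def)

lemma Rn_iff: "x \<in> Rn n \<longleftrightarrow> (\<forall>i\<ge>n. x i = 0)" by (simp add: Rn_def)

lemma orig_Rn[simp]: "orig \<in> Rn n" by (simp add: Rn_def orig_def)

lemma Rn_upd[simp]: "x \<in> Rn n \<Longrightarrow> i < n \<Longrightarrow> x(i := t) \<in> Rn n"
  by (simp add: Rn_def)

lemma open_Rn_Rn[simp]: "open_Rn n (Rn n)" by (auto simp: open_Rn_def intro: exI[of _ 1])

lemma open_Rn_Int: "open_Rn n A \<Longrightarrow> open_Rn n B \<Longrightarrow> open_Rn n (A \<inter> B)"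
  unfolding open_Rn_def
proof (intro conjI ballI)
  fix x assume A: "A \<subseteq> Rn n \<and> (\<forall>x\<in>A. \<exists>e>0. \<forall>y\<in>Rn n. (\<forall>i<n. \<bar>y i - x i\<bar> < e) \<longrightarrow> y \<in> A)"
    and B: "B \<subseteq> Rn n \<and> (\<forall>x\<in>B. \<exists>e>0. \<forall>y\<in>Rn n. (\<forall>i<n. \<bar>y i - x i\<bar> < e) \<longrightarrow> y \<in> B)"
    and x: "x \<in> A \<inter> B"
  then obtain e1 e2 where "e1 > 0" "e2 > 0" and 
    "\<forall>y\<in>Rn n. (\<forall>i<n. \<bar>y i - x i\<bar> < e1) \<longrightarrow> y \<in> A"
    "\<forall>y\<in>Rn n. (\<forall>i<n. \<bar>y i - x i\<bar> < e2) \<longrightarrow> y \<in> B" by blast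
  thus "\<exists>e>0. \<forall>y\<in>Rn n. (\<forall>i<n. \<bar>y i - x i\<bar> < e) \<longrightarrow> y \<in> A \<inter> B"
    by (intro exI[of _ "min e1 e2"]) auto
next
  assume "A \<subseteq> Rn n \<and> (\<forall>x\<in>A. \<exists>e>0. \<forall>y\<in>Rn n. (\<forall>i<n. \<bar>y i - x i\<bar> < e) \<longrightarrow> y \<in> A)" thus "A \<inter> B \<subseteq> Rn n" by blast
qed


abbreviation hp :: "nat \<Rightarrow> (rn \<Rightarrow> real) \<Rightarrow> rn \<Rightarrow> real \<Rightarrow> bool" where
  "hp i g x D \<equiv> ((\<lambda>t. g (x(i := x i + t))) has_real_derivative D) (at 0)"

lemma hp_pd: "hp i g x D \<Longrightarrow> pd i g x = D"
  unfolding pd_def by (rule DERIV_imp_deriv)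

lemma ev_upd_in:
  assumes "open_Rn n U" "x \<in> U" "i < n"
  shows "eventually (\<lambda>t. x(i := x i + t) \<in> U) (nhds 0)"
proof -
  from assms obtain e where e: "e > 0" "\<forall>y\<in>Rn n. (\<forall>i<n. \<bar>y i - x i\<bar> < e) \<longrightarrow> y \<in> U"
    and UR: "U \<subseteq> Rn n" unfolding open_Rn_def by blast
  have "x \<in> Rn n" using UR assms by auto
  show ?thesis unfolding eventually_nhds_metric
    apply (rule exI[of _ e])
    using e \<open>x \<in> Rn n\<close> assms(3) by (auto simp: dist_real_def)
qed

lemma hp_local:
  assumes "open_Rn n U" "x \<in> U" "i < n" "\<forall>y\<in>U. F y = G y"
  shows "hp i F x D \<longleftrightarrow> hp i G x D"
proof (rule DERIV_cong_ev)
  show "eventually (\<lambda>t. F (x(i := x i + t)) = G (x(i := x i + t))) (nhds 0)"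
    using ev_upd_in[OF assms(1-3)] by eventually_elim (use assms(4) in auto)
qed auto

lemma pd_local:
  assumes "open_Rn n U" "x \<in> U" "i < n" "\<forall>y\<in>U. F y = G y"
  shows "pd i F x = pd i G x"
  unfolding pd_def deriv_def using hp_local[OF assms] by simp

lemma iter_pd_local:
  assumes "open_Rn n U" "\<forall>y\<in>U. F y = G y" "set js \<subseteq> {..<n}"
  shows "\<forall>y\<in>U. iter_pd js F y = iter_pd js G y"
  using assms(3)
proof (induction js)
  case Nil thus ?case using assms by simp
next
  case (Cons j js)
  thus ?case using pd_local[OF assms(1)] by auto
qed

lemma iter_pd_snoc: "iter_pd (js @ [i]) F = iter_pd js (pd i F)"
  by (induction js) auto

definition sm0 :: "nat \<Rightarrow> rn set \<Rightarrow> (rn \<Rightarrow> real) \<Rightarrow> bool" where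
  "sm0 n U F \<longleftrightarrow> cont_Rn n U F \<and> (\<forall>i<n. \<forall>x\<in>U. \<exists>D. hp i F x D)"

definition smk :: "nat \<Rightarrow> nat \<Rightarrow> rn set \<Rightarrow> (rn \<Rightarrow> real) \<Rightarrow> bool" where
  "smk k n U F \<longleftrightarrow> (\<forall>js. set js \<subseteq> {..<n} \<and> length js \<le> k \<longrightarrow> sm0 n U (iter_pd js F))"

lemma smooth_real_smk: "smooth_real n U F \<longleftrightarrow> (\<forall>k. smk k n U F)"
  unfolding smooth_real_def smk_def sm0_def by (metis le_refl)

lemma smk_0: "smk 0 n U F \<longleftrightarrow> sm0 n U F"
  unfolding smk_def by auto

lemma smk_Suc: "smk (Suc k) n U F \<longleftrightarrow> sm0 n U F \<and> (\<forall>i<n. smk k n U (pd i F))"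
proof
  assume A: "smk (Suc k) n U F"
  show "sm0 n U F \<and> (\<forall>i<n. smk k n U (pd i F))"
  proof (intro conjI allI impI)
    show "sm0 n U F" using A[unfolded smk_def, rule_format, of "[]"] by simp
    fix i assume "i < n"
    show "smk k n U (pd i F)" unfolding smk_def
    proof (intro allI impI)
      fix js assume "set js \<subseteq> {..<n} \<and> length js \<le> k"
      thus "sm0 n U (iter_pd js (pd i F))"
        using A[unfolded smk_def, rule_format, of "js @ [i]"] \<open>i < n\<close>
        by (auto simp: iter_pd_snoc)
    qed
  qed
next
  assume A: "sm0 n U F \<and> (\<forall>i<n. smk k n U (pd i F))"
  show "smk (Suc k) n U F" unfolding smk_def
  proof (intro allI impI)
    fix js assume js: "set js \<subseteq> {..<n} \<and> length js \<le> Suc k"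
    show "sm0 n U (iter_pd js F)"
    proof (cases js rule: rev_cases)
      case Nil thus ?thesis using A by simp
    next
      case (snoc ys i)
      thus ?thesis using A js unfolding smk_def by (auto simp: iter_pd_snoc)
    qed
  qed
qed

lemma smk_mono: "smk (Suc k) n U F \<Longrightarrow> smk k n U F"
  unfolding smk_def by auto

lemma smk_mono': "smk k n U F \<Longrightarrow> j \<le> k \<Longrightarrow> smk j n U F"
  unfolding smk_def by auto

lemma sm0_local:
  assumes "open_Rn n U" "\<forall>y\<in>U. F y = G y" "sm0 n U F"
  shows "sm0 n U G"
  using assms hp_local[OF assms(1) _ _ assms(2)] unfolding sm0_def cont_Rn_def by auto

lemma smk_local:
  assumes "open_Rn n U" "\<forall>y\<in>U. F y = G y" "smk k n U F"
  shows "smk k n U G"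
  using assms iter_pd_local[OF assms(1,2)] sm0_local[OF assms(1)] unfolding smk_def by blast

lemma smooth_local:
  assumes "open_Rn n U" "\<forall>y\<in>U. F y = G y" "smooth_real n U F"
  shows "smooth_real n U G"
  using assms smk_local unfolding smooth_real_smk by blast

lemma sm0_sub:
  assumes "V \<subseteq> U" "sm0 n U F" shows "sm0 n V F"
  using assms unfolding sm0_def cont_Rn_def by (meson subsetD)

lemma smk_sub: "V \<subseteq> U \<Longrightarrow> smk k n U F \<Longrightarrow> smk k n V F"
  unfolding smk_def using sm0_sub by blast

lemma smooth_sub: "V \<subseteq> U \<Longrightarrow> smooth_real n U F \<Longrightarrow> smooth_real n V F"
  unfolding smooth_real_smk using smk_sub by blast

lemma sm0_sheaf:
  assumes "open_Rn n U" "\<forall>x\<in>U. \<exists>V. open_Rn n V \<and> x \<in> V \<and> V \<subseteq> U \<and> sm0 n V F"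
  shows "sm0 n U F"
  unfolding sm0_def
proof (intro conjI allI impI ballI)
  fix i x assume "i < n" "x \<in> U"
  thus "\<exists>D. hp i F x D" using assms(2) unfolding sm0_def by blast
next
  show "cont_Rn n U F" unfolding cont_Rn_def
  proof (intro ballI allI impI)
    fix x and e :: real assume x: "x \<in> U" and e: "e > 0"
    obtain V where V: "open_Rn n V" "x \<in> V" "V \<subseteq> U" "sm0 n V F" using assms(2) x by blast
    obtain d1 where d1: "d1 > 0" "\<forall>y\<in>Rn n. (\<forall>i<n. \<bar>y i - x i\<bar> < d1) \<longrightarrow> y \<in> V"
      using V unfolding open_Rn_def by blast
    obtain d2 where d2: "d2 > 0" "\<forall>y\<in>V. (\<forall>i<n. \<bar>y i - x i\<bar> < d2) \<longrightarrow> \<bar>F y - F x\<bar> < e"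
      using V e unfolding sm0_def cont_Rn_def by blast
    have UR: "U \<subseteq> Rn n" using assms(1) unfolding open_Rn_def by auto
    show "\<exists>d>0. \<forall>y\<in>U. (\<forall>i<n. \<bar>y i - x i\<bar> < d) \<longrightarrow> \<bar>F y - F x\<bar> < e"
      apply (rule exI[of _ "min d1 d2"])
      using d1 d2 UR by auto
  qed
qed

lemma smooth_sheaf:
  assumes "open_Rn n U" "\<forall>x\<in>U. \<exists>V. open_Rn n V \<and> x \<in> V \<and> V \<subseteq> U \<and> smooth_real n V F"
  shows "smooth_real n U F"
  unfolding smooth_real_smk smk_def
proof (intro allI impI)
  fix k js assume "set js \<subseteq> {..<n} \<and> length js \<le> k"
  show "sm0 n U (iter_pd js F)"
    apply (rule sm0_sheaf[OF assms(1)])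
    using assms(2) \<open>set js \<subseteq> {..<n} \<and> length js \<le> k\<close> unfolding smooth_real_smk smk_def by blast
qed


lemma sm0_add: assumes "sm0 n U F" "sm0 n U G" shows "sm0 n U (\<lambda>y. F y + G y)"
  unfolding sm0_def
proof (intro conjI allI impI ballI)
  show "cont_Rn n U (\<lambda>y. F y + G y)" using assms unfolding sm0_def cont_Rn_tendsto
    by (auto intro!: tendsto_add)
  fix i x assume "i < n" "x \<in> U"
  then obtain D E where "hp i F x D" "hp i G x E" using assms unfolding sm0_def by meson
  from DERIV_add[OF this] show "\<exists>D. hp i (\<lambda>y. F y + G y) x D" by blast
qed

lemma sm0_mult: assumes "sm0 n U F" "sm0 n U G" shows "sm0 n U (\<lambda>y. F y * G y)"
  unfolding sm0_def
proof (intro conjI allI impI ballI)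
  show "cont_Rn n U (\<lambda>y. F y * G y)" using assms unfolding sm0_def cont_Rn_tendsto
    by (auto intro!: tendsto_mult)
  fix i x assume "i < n" "x \<in> U"
  then obtain D E where "hp i F x D" "hp i G x E" using assms unfolding sm0_def by meson
  from DERIV_mult[OF this] show "\<exists>D. hp i (\<lambda>y. F y * G y) x D" by blast
qed

lemma pd_add: "hp i F x D \<Longrightarrow> hp i G x E \<Longrightarrow> pd i (\<lambda>y. F y + G y) x = pd i F x + pd i G x"
proof -
  assume a: "hp i F x D" "hp i G x E"
  have "hp i (\<lambda>y. F y + G y) x (D + E)" using DERIV_add[OF a] by simp
  thus ?thesis using hp_pd[OF a(1)] hp_pd[OF a(2)] hp_pd by simp
qed

lemma pd_mult: "hp i F x D \<Longrightarrow> hp i G x E \<Longrightarrow>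
   pd i (\<lambda>y. F y * G y) x = pd i F x * G x + F x * pd i G x"
proof -
  assume a: "hp i F x D" "hp i G x E"
  have "hp i (\<lambda>y. F y * G y) x (D * G (x(i := x i + 0)) + E * F (x(i := x i + 0)))"
    using DERIV_mult[OF a] by simp
  hence "pd i (\<lambda>y. F y * G y) x = D * G x + E * F x" using hp_pd by simp
  thus ?thesis using hp_pd[OF a(1)] hp_pd[OF a(2)] by simp
qed

lemma smk_add: "smk k n U F \<Longrightarrow> smk k n U G \<Longrightarrow> open_Rn n U \<Longrightarrow> smk k n U (\<lambda>y. F y + G y)"
proof (induction k arbitrary: F G)
  case 0 thus ?case by (simp add: smk_0 sm0_add)
next
  case (Suc k)
  show ?case unfolding smk_Suc
  proof (intro conjI allI impI)
    show "sm0 n U (\<lambda>y. F y + G y)" using Suc.prems by (simp add: smk_Suc sm0_add)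
    fix i assume i: "i < n"
    have "smk k n U (\<lambda>y. pd i F y + pd i G y)"
      using Suc.IH Suc.prems i by (simp add: smk_Suc)
    moreover have "\<forall>y\<in>U. pd i F y + pd i G y = pd i (\<lambda>y. F y + G y) y"
    proof
      fix y assume "y \<in> U"
      have "\<exists>D. hp i F y D" "\<exists>E. hp i G y E"
        using Suc.prems i \<open>y \<in> U\<close> by (auto simp: smk_Suc sm0_def)
      then obtain D E where "hp i F y D" "hp i G y E" by blast
      thus "pd i F y + pd i G y = pd i (\<lambda>y. F y + G y) y" by (simp add: pd_add)
    qed
    ultimately show "smk k n U (pd i (\<lambda>y. F y + G y))"
      by (rule smk_local[OF Suc.prems(3), rotated])
  qed
qed

lemma smk_mult: "smk k n U F \<Longrightarrow> smk k n U G \<Longrightarrow> open_Rn n U \<Longrightarrow> smk k n U (\<lambda>y. F y * G y)"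
proof (induction k arbitrary: F G)
  case 0 thus ?case by (simp add: smk_0 sm0_mult)
next
  case (Suc k)
  show ?case unfolding smk_Suc
  proof (intro conjI allI impI)
    show "sm0 n U (\<lambda>y. F y * G y)" using Suc.prems by (simp add: smk_Suc sm0_mult)
    fix i assume i: "i < n"
    have "smk k n U (\<lambda>y. pd i F y * G y + F y * pd i G y)"
      apply (rule smk_add[OF _ _ Suc.prems(3)])
      using Suc.IH Suc.prems i smk_mono by (auto simp: smk_Suc)
    moreover have "\<forall>y\<in>U. pd i F y * G y + F y * pd i G y = pd i (\<lambda>y. F y * G y) y"
    proof
      fix y assume "y \<in> U"
      have "\<exists>D. hp i F y D" "\<exists>E. hp i G y E"
        using Suc.prems i \<open>y \<in> U\<close> by (auto simp: smk_Suc sm0_def)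
      then obtain D E where "hp i F y D" "hp i G y E" by blast
      thus "pd i F y * G y + F y * pd i G y = pd i (\<lambda>y. F y * G y) y" by (simp add: pd_mult)
    qed
    ultimately show "smk k n U (pd i (\<lambda>y. F y * G y))"
      by (rule smk_local[OF Suc.prems(3), rotated])
  qed
qed

lemma pd_const[simp]: "pd i (\<lambda>_. c) x = 0"
  unfolding pd_def by simp

lemma smk_const: "smk k n U (\<lambda>_. c)"
proof (induction k arbitrary: c)
  case 0 thus ?case by (auto simp: smk_0 sm0_def cont_Rn_def intro!: exI[of _ 0])
next
  case (Suc k)
  have "pd i (\<lambda>_. c) = (\<lambda>_. 0)" for i by (rule ext) simp
  thus ?case using Suc by (auto simp: smk_Suc sm0_def cont_Rn_def intro!: exI[of _ 0])
qed

lemma smooth_const[simp]: "smooth_real n U (\<lambda>_. c)"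
  by (simp add: smooth_real_smk smk_const)

lemma hp_coord: "hp i (\<lambda>y. y j) x (if i = j then 1 else 0)"
proof (cases "i = j")
  case True thus ?thesis by (auto intro!: derivative_eq_intros)
next
  case False thus ?thesis by (auto intro!: derivative_eq_intros)
qed

lemma pd_coord: "pd i (\<lambda>y. y j) = (\<lambda>x. if i = j then 1 else 0)"
  using hp_pd[OF hp_coord] by auto

lemma cont_coord:
  assumes "open_Rn n U" shows "cont_Rn n U (\<lambda>y. y j)"
  unfolding cont_Rn_def
proof (intro ballI allI impI)
  fix x and e :: real assume x: "x \<in> U" and e: "e > 0"
  have UR: "U \<subseteq> Rn n" using assms unfolding open_Rn_def by auto
  show "\<exists>d>0. \<forall>y\<in>U. (\<forall>i<n. \<bar>y i - x i\<bar> < d) \<longrightarrow> \<bar>y j - x j\<bar> < e"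
  proof (cases "j < n")
    case True thus ?thesis using e by auto
  next
    case False 
    have z: "\<forall>y\<in>U. y j = 0" using UR False by (auto simp: Rn_def)
    show ?thesis
    proof (intro exI[of _ 1] conjI ballI impI)
      fix y assume "y \<in> U"
      hence "y j = 0" "x j = 0" using z x by auto
      thus "\<bar>y j - x j\<bar> < e" using e by simp
    qed simp
  qed
qed

lemma sm0_coord: "open_Rn n U \<Longrightarrow> sm0 n U (\<lambda>y. y j)"
  unfolding sm0_def using cont_coord hp_coord by blast

lemma smk_coord: 
  assumes "open_Rn n U" shows "smk k n U (\<lambda>y. y j)"
proof (cases k)
  case 0 thus ?thesis using sm0_coord[OF assms] by (simp add: smk_0)
next
  case (Suc k')
  have "smk k' n U (pd i (\<lambda>y. y j))" for i
    unfolding pd_coord by (rule smk_const)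
  thus ?thesis using Suc sm0_coord[OF assms] by (simp add: smk_Suc)
qed

lemma smooth_coord: "open_Rn n U \<Longrightarrow> smooth_real n U (\<lambda>y. y j)"
  by (simp add: smooth_real_smk smk_coord)

lemma smooth_add: "smooth_real n U F \<Longrightarrow> smooth_real n U G \<Longrightarrow> open_Rn n U \<Longrightarrow>
    smooth_real n U (\<lambda>y. F y + G y)"
  by (simp add: smooth_real_smk smk_add)

lemma smooth_mult: "smooth_real n U F \<Longrightarrow> smooth_real n U G \<Longrightarrow> open_Rn n U \<Longrightarrow>
    smooth_real n U (\<lambda>y. F y * G y)"
  by (simp add: smooth_real_smk smk_mult)

lemma smooth_sum: "finite S \<Longrightarrow> (\<And>k. k \<in> S \<Longrightarrow> smooth_real n U (f k)) \<Longrightarrow> open_Rn n U \<Longrightarrow>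
    smooth_real n U (\<lambda>y. \<Sum>k\<in>S. f k y)"
  by (induction S rule: finite_induct) (auto intro: smooth_add)

lemma smooth_minus: "smooth_real n U F \<Longrightarrow> smooth_real n U G \<Longrightarrow> open_Rn n U \<Longrightarrow>
    smooth_real n U (\<lambda>y. F y - G y)"
proof -
  assume a: "smooth_real n U F" "smooth_real n U G" "open_Rn n U"
  have "smooth_real n U (\<lambda>y. F y + (-1) * G y)"
    by (intro smooth_add smooth_mult a smooth_const)
  thus ?thesis by simp
qed

lemma smooth_pd: "smooth_real n U F \<Longrightarrow> i < n \<Longrightarrow> smooth_real n U (pd i F)"
  unfolding smooth_real_smk using smk_Suc by blast

lemma smooth_sm0: "smooth_real n U F \<Longrightarrow> sm0 n U F"
  unfolding smooth_real_smk using smk_0 by blast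

lemma smooth_hp: "smooth_real n U F \<Longrightarrow> i < n \<Longrightarrow> x \<in> U \<Longrightarrow> hp i F x (pd i F x)"
proof -
  assume "smooth_real n U F" "i < n" "x \<in> U"
  then obtain D where "hp i F x D" using smooth_sm0[unfolded sm0_def] by blast
  thus ?thesis using hp_pd by simp
qed

lemma smooth_cont: "smooth_real n U F \<Longrightarrow> cont_Rn n U F"
  using smooth_sm0[unfolded sm0_def] by blast


lemma mvt_sym:
  fixes f :: "real \<Rightarrow> real"
  assumes "\<And>s. \<bar>s\<bar> \<le> \<bar>d\<bar> \<Longrightarrow> (f has_real_derivative f' s) (at s)"
  shows "\<exists>\<xi>. \<bar>\<xi>\<bar> \<le> \<bar>d\<bar> \<and> f d - f 0 = d * f' \<xi>"
proof (cases "d > 0")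
  case True
  have "\<exists>z>0. z < d \<and> f d - f 0 = (d - 0) * f' z"
    by (rule MVT2) (use True assms in auto)
  then obtain z where "z > 0" "z < d" "f d - f 0 = (d - 0) * f' z" by blast
  thus ?thesis using True by (intro exI[of _ z]) auto
next
  case False
  show ?thesis
  proof (cases "d < 0")
    case True
    have "\<exists>z>d. z < 0 \<and> f 0 - f d = (0 - d) * f' z"
      by (rule MVT2) (use True assms in auto)
    then obtain z where "z > d" "z < 0" "f 0 - f d = (0 - d) * f' z" by blast
    thus ?thesis using True by (intro exI[of _ z]) (auto simp: algebra_simps)
  next
    case False
    hence "d = 0" using \<open>\<not> d > 0\<close> by auto
    thus ?thesis by auto
  qed
qed

lemma hp_shift:
  assumes "hp k h (q(k := c + s0)) D"
  shows "((\<lambda>s. h (q(k := c + s))) has_real_derivative D) (at s0)"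
proof -
  have "((\<lambda>t. h (q(k := c + (t + s0)))) has_real_derivative D) (at 0)"
    using assms by (simp add: add.commute add.left_commute)
  hence "((\<lambda>s. h (q(k := c + s))) has_real_derivative D) (at (0 + s0))"
    by (subst DERIV_shift) 
  thus ?thesis by simp
qed

lemma curve_chain:
  fixes h :: "rn \<Rightarrow> real" and \<gamma> :: "real \<Rightarrow> rn"
  assumes U: "open_Rn n U" and y0U: "\<gamma> 0 \<in> U"
    and hpU: "\<forall>y\<in>U. \<forall>j<n. hp j h y (pd j h y)"
    and cnt: "\<forall>j<n. cont_Rn n U (pd j h)"
    and dg: "\<forall>j<n. ((\<lambda>t. \<gamma> t j) has_real_derivative g' j) (at 0)"
    and evR: "eventually (\<lambda>t. \<gamma> t \<in> Rn n) (at 0)"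
  shows "((\<lambda>t. h (\<gamma> t)) has_real_derivative (\<Sum>j<n. pd j h (\<gamma> 0) * g' j)) (at 0)"
proof -
  define y0 where "y0 = \<gamma> 0"
  have UR: "U \<subseteq> Rn n" using U unfolding open_Rn_def by auto
  have y0R: "y0 \<in> Rn n" using UR y0U y0_def by auto
  obtain e where e: "e > 0" "\<forall>y\<in>Rn n. (\<forall>i<n. \<bar>y i - y0 i\<bar> < e) \<longrightarrow> y \<in> U"
    using U y0U unfolding open_Rn_def y0_def by blast
  have tl: "((\<lambda>t. \<gamma> t j) \<longlongrightarrow> y0 j) (at 0)" if "j < n" for j
  proof -
    have "isCont (\<lambda>t. \<gamma> t j) 0" using dg that DERIV_isCont by blast
    thus ?thesis unfolding isCont_def y0_def .
  qed
  have evb: "eventually (\<lambda>t. \<forall>j\<in>{..<n}. \<bar>\<gamma> t j - y0 j\<bar> < r) (at 0)" if "r > 0" for r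
  proof (rule eventually_ball_finite)
    show "\<forall>j\<in>{..<n}. \<forall>\<^sub>F t in at 0. \<bar>\<gamma> t j - y0 j\<bar> < r"
      using tl that unfolding tendsto_iff dist_real_def by auto
  qed simp
  define good where "good t \<longleftrightarrow> (\<forall>j<n. \<bar>\<gamma> t j - y0 j\<bar> < e) \<and> \<gamma> t \<in> Rn n" for t
  have evgood: "eventually good (at 0)"
    using evb[OF e(1)] evR unfolding good_def by eventually_elim auto
  define z where "z k t = (\<lambda>i. if i < k then \<gamma> t i else y0 i)" for k t
  have zU: "(z k t)(k := y0 k + s) \<in> U" if "good t" "k < n" "\<bar>s\<bar> \<le> \<bar>\<gamma> t k - y0 k\<bar>" for k t s
  proof -
    have "(z k t)(k := y0 k + s) \<in> Rn n"
      using y0R that unfolding Rn_def z_def by auto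
    moreover have "\<forall>i<n. \<bar>((z k t)(k := y0 k + s)) i - y0 i\<bar> < e"
      using that e(1) unfolding good_def z_def by auto
    ultimately show ?thesis using e(2) by blast
  qed
  have zS: "z (Suc k) t = (z k t)(k := y0 k + (\<gamma> t k - y0 k))" for k t
    unfolding z_def by (rule ext) auto
  have z0: "z 0 t = y0" for t unfolding z_def by auto
  have zn: "z n t = \<gamma> t" if "good t" for t
    using that y0R unfolding z_def good_def Rn_def by (auto intro!: ext)
  define P where "P k t \<xi> \<longleftrightarrow> \<bar>\<xi>\<bar> \<le> \<bar>\<gamma> t k - y0 k\<bar> \<and>
      h (z (Suc k) t) - h (z k t) = (\<gamma> t k - y0 k) * pd k h ((z k t)(k := y0 k + \<xi>))" for k t \<xi>
  have exP: "\<exists>\<xi>. P k t \<xi>" if "good t" "k < n" for k t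
  proof -
    let ?f = "\<lambda>s. h ((z k t)(k := y0 k + s))"
    have "\<exists>\<xi>. \<bar>\<xi>\<bar> \<le> \<bar>\<gamma> t k - y0 k\<bar> \<and> ?f (\<gamma> t k - y0 k) - ?f 0 = 
           (\<gamma> t k - y0 k) * pd k h ((z k t)(k := y0 k + \<xi>))"
    proof (rule mvt_sym)
      fix s assume s: "\<bar>s\<bar> \<le> \<bar>\<gamma> t k - y0 k\<bar>"
      have pU: "(z k t)(k := y0 k + s) \<in> U" using zU[OF that s] .
      have "hp k h ((z k t)(k := y0 k + s)) (pd k h ((z k t)(k := y0 k + s)))"
        using hpU pU that(2) by blast
      note hh = this
      show "(?f has_real_derivative pd k h ((z k t)(k := y0 k + s))) (at s)"
        by (rule hp_shift[OF hh])
    qed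
    moreover have "?f 0 = h (z k t)" 
    proof -
      have "(z k t)(k := y0 k + 0) = z k t" unfolding z_def by (rule ext) auto
      thus ?thesis by simp
    qed
    ultimately show ?thesis unfolding P_def zS by auto
  qed
  define \<xi> where "\<xi> k t = (SOME \<xi>. P k t \<xi>)" for k t
  have P\<xi>: "P k t (\<xi> k t)" if "good t" "k < n" for k t
    using someI_ex[OF exP[OF that]] unfolding \<xi>_def .
  define w where "w k t = (z k t)(k := y0 k + \<xi> k t)" for k t
  have tele: "h (\<gamma> t) - h y0 = (\<Sum>k<n. (\<gamma> t k - y0 k) * pd k h (w k t))" if "good t" for t
  proof -
    have "h (\<gamma> t) - h y0 = (\<Sum>k<n. h (z (Suc k) t) - h (z k t))"
      using sum_lessThan_telescope[of "\<lambda>k. h (z k t)" n] zn[OF that] z0 by simp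
    also have "\<dots> = (\<Sum>k<n. (\<gamma> t k - y0 k) * pd k h (w k t))"
      using P\<xi>[OF that] unfolding P_def w_def by (intro sum.cong) auto
    finally show ?thesis .
  qed
  have wlim: "((\<lambda>t. pd k h (w k t)) \<longlongrightarrow> pd k h y0) (at 0)" if k: "k < n" for k
  proof -
    have c: "(pd k h \<longlongrightarrow> pd k h y0) (nbh n U y0)"
      using cnt k y0U unfolding cont_Rn_tendsto y0_def by auto
    have "filterlim (w k) (nbh n U y0) (at 0)"
      unfolding filterlim_iff
    proof (intro allI impI)
      fix Q assume "eventually Q (nbh n U y0)"
      then obtain r where r: "r > 0" "\<forall>y\<in>U. (\<forall>i<n. \<bar>y i - y0 i\<bar> < r) \<longrightarrow> Q y"
        unfolding eventually_nbh by blast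
      show "eventually (\<lambda>t. Q (w k t)) (at 0)"
        using evb[OF r(1)] evgood
      proof eventually_elim
        case (elim t)
        have Pk: "P k t (\<xi> k t)" using P\<xi>[OF elim(2) k] .
        have "w k t \<in> U" unfolding w_def using zU[OF elim(2) k] Pk unfolding P_def by blast
        moreover have "\<forall>i<n. \<bar>w k t i - y0 i\<bar> < r"
        proof -
          have a1: "\<bar>\<xi> k t\<bar> \<le> \<bar>\<gamma> t k - y0 k\<bar>" using Pk unfolding P_def by blast
          have a2: "\<bar>\<gamma> t k - y0 k\<bar> < r" using elim(1) k by auto
          show ?thesis using elim(1) a1 a2 r(1) unfolding w_def z_def by auto
        qed
        ultimately show ?case using r(2) by blast
      qed
    qed
    thus ?thesis using filterlim_compose[OF c] by blast
  qed
  have qlim: "((\<lambda>t. (\<gamma> t k - y0 k) / t) \<longlongrightarrow> g' k) (at 0)" if "k < n" for k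
    using dg that unfolding has_field_derivative_iff y0_def by simp
  have lim: "((\<lambda>t. \<Sum>k<n. pd k h (w k t) * ((\<gamma> t k - y0 k) / t)) \<longlongrightarrow>
        (\<Sum>k<n. pd k h y0 * g' k)) (at 0)"
    by (intro tendsto_sum tendsto_mult wlim qlim) auto
  have ev: "eventually (\<lambda>t. (\<Sum>k<n. pd k h (w k t) * ((\<gamma> t k - y0 k) / t)) =
        (h (\<gamma> t) - h (\<gamma> 0)) / (t - 0)) (at 0)"
    using evgood eventually_neq_at_within[of 0 0 UNIV]
  proof eventually_elim
    case (elim t)
    have "(h (\<gamma> t) - h (\<gamma> 0)) / (t - 0) = (\<Sum>k<n. (\<gamma> t k - y0 k) * pd k h (w k t)) / t"
      using tele[OF elim(1)] y0_def by simp
    also have "\<dots> = (\<Sum>k<n. pd k h (w k t) * ((\<gamma> t k - y0 k) / t))"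
      by (simp add: sum_divide_distrib mult.commute)
    finally show ?case by simp
  qed
  show ?thesis unfolding has_field_derivative_iff
    using tendsto_cong[OF ev] lim y0_def by simp
qed


lemma ev_at_upd_in:
  assumes "open_Rn n U" "x \<in> U" "i < n"
  shows "eventually (\<lambda>t. x(i := x i + t) \<in> U) (at 0)"
  using ev_upd_in[OF assms] unfolding eventually_at_filter by eventually_elim auto

lemma smooth_map_comp_sm: "smooth_map m W n U g \<Longrightarrow> j < n \<Longrightarrow> smooth_real m W (\<lambda>u. g u j)"
  unfolding smooth_map_def by blast

lemma hp_chain:
  assumes W: "open_Rn m W" and U: "open_Rn n U" and h: "smooth_real n U h"
    and g: "smooth_map m W n U g" and x: "x \<in> W" and i: "i < m"
  shows "hp i (\<lambda>y. h (g y)) x (\<Sum>j<n. pd j h (g x) * pd i (\<lambda>u. g u j) x)"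
proof -
  have gW: "\<forall>u\<in>W. g u \<in> U" using g unfolding smooth_map_def by blast
  have UR: "U \<subseteq> Rn n" using U unfolding open_Rn_def by blast
  have "((\<lambda>t. h (g (x(i := x i + t)))) has_real_derivative
        (\<Sum>j<n. pd j h (g (x(i := x i + 0))) * pd i (\<lambda>u. g u j) x)) (at 0)"
  proof (rule curve_chain[OF U])
    show "g (x(i := x i + 0)) \<in> U" using gW x by simp
    show "\<forall>y\<in>U. \<forall>j<n. hp j h y (pd j h y)" using smooth_hp[OF h] by blast
    show "\<forall>j<n. cont_Rn n U (pd j h)" using smooth_cont smooth_pd[OF h] by blast
    show "\<forall>j<n. ((\<lambda>t. g (x(i := x i + t)) j) has_real_derivative pd i (\<lambda>u. g u j) x) (at 0)"
      using smooth_hp[OF smooth_map_comp_sm[OF g] i x] by blast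
    show "eventually (\<lambda>t. g (x(i := x i + t)) \<in> Rn n) (at 0)"
      using ev_at_upd_in[OF W x i] by eventually_elim (use gW UR in blast)
  qed
  thus ?thesis by simp
qed

lemma filterlim_smooth_map:
  assumes g: "smooth_map m W n U g" and x: "x \<in> W"
  shows "filterlim g (nbh n U (g x)) (nbh m W x)"
  unfolding filterlim_iff
proof (intro allI impI)
  fix Q assume "eventually Q (nbh n U (g x))"
  then obtain r where r: "r > 0" "\<forall>y\<in>U. (\<forall>i<n. \<bar>y i - g x i\<bar> < r) \<longrightarrow> Q y"
    unfolding eventually_nbh by blast
  have gW: "\<forall>u\<in>W. g u \<in> U" using g unfolding smooth_map_def by blast
  have "eventually (\<lambda>y. \<forall>j\<in>{..<n}. \<bar>g y j - g x j\<bar> < r) (nbh m W x)"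
  proof (rule eventually_ball_finite)
    show "\<forall>j\<in>{..<n}. \<forall>\<^sub>F y in nbh m W x. \<bar>g y j - g x j\<bar> < r"
    proof
      fix j assume "j \<in> {..<n}"
      hence "cont_Rn m W (\<lambda>u. g u j)" using smooth_cont smooth_map_comp_sm[OF g] by auto
      hence "((\<lambda>u. g u j) \<longlongrightarrow> g x j) (nbh m W x)" using x unfolding cont_Rn_tendsto by blast
      thus "\<forall>\<^sub>F y in nbh m W x. \<bar>g y j - g x j\<bar> < r"
        using r(1) unfolding tendsto_iff dist_real_def by blast
    qed
  qed simp
  moreover have "eventually (\<lambda>y. y \<in> W) (nbh m W x)"
    unfolding eventually_nbh by (auto intro: exI[of _ 1])
  ultimately show "eventually (\<lambda>y. Q (g y)) (nbh m W x)"
    by eventually_elim (use r gW in auto)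
qed

lemma sm0_comp:
  assumes W: "open_Rn m W" and U: "open_Rn n U" and h: "smooth_real n U h"
    and g: "smooth_map m W n U g"
  shows "sm0 m W (\<lambda>y. h (g y))"
  unfolding sm0_def
proof (intro conjI allI impI ballI)
  fix i x assume "i < m" "x \<in> W"
  thus "\<exists>D. hp i (\<lambda>y. h (g y)) x D" using hp_chain[OF W U h g] by blast
next
  show "cont_Rn m W (\<lambda>y. h (g y))" unfolding cont_Rn_tendsto
  proof
    fix x assume x: "x \<in> W"
    have gW: "\<forall>u\<in>W. g u \<in> U" using g unfolding smooth_map_def by blast
    have "(h \<longlongrightarrow> h (g x)) (nbh n U (g x))"
      using smooth_cont[OF h] gW x unfolding cont_Rn_tendsto by blast
    from filterlim_compose[OF this filterlim_smooth_map[OF g x]]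
    show "((\<lambda>y. h (g y)) \<longlongrightarrow> h (g x)) (nbh m W x)" .
  qed
qed

lemma smk_sum: "finite S \<Longrightarrow> (\<And>k. k \<in> S \<Longrightarrow> smk q n U (f k)) \<Longrightarrow> open_Rn n U \<Longrightarrow>
    smk q n U (\<lambda>y. \<Sum>k\<in>S. f k y)"
  by (induction S rule: finite_induct) (auto intro: smk_add simp: smk_const)

lemma smk_comp:
  assumes W: "open_Rn m W" and U: "open_Rn n U" and g: "smooth_map m W n U g"
  shows "smooth_real n U h \<Longrightarrow> smk k m W (\<lambda>y. h (g y))"
proof (induction k arbitrary: h)
  case 0 thus ?case using sm0_comp[OF W U _ g] by (simp add: smk_0)
next
  case (Suc k)
  show ?case unfolding smk_Suc
  proof (intro conjI allI impI)
    show "sm0 m W (\<lambda>y. h (g y))" using sm0_comp[OF W U Suc.prems g] .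
    fix i assume i: "i < m"
    have "smk k m W (\<lambda>y. \<Sum>j<n. pd j h (g y) * pd i (\<lambda>u. g u j) y)"
    proof (rule smk_sum[OF _ _ W])
      fix j assume "j \<in> {..<n}"
      hence j: "j < n" by simp
      have "smk k m W (\<lambda>y. pd j h (g y))" using Suc.IH smooth_pd[OF Suc.prems j] by blast
      moreover have "smk k m W (pd i (\<lambda>u. g u j))"
        using smooth_pd[OF smooth_map_comp_sm[OF g j] i] unfolding smooth_real_smk by blast
      ultimately show "smk k m W (\<lambda>y. pd j h (g y) * pd i (\<lambda>u. g u j) y)"
        using smk_mult[OF _ _ W] by blast
    qed simp
    moreover have "\<forall>y\<in>W. (\<Sum>j<n. pd j h (g y) * pd i (\<lambda>u. g u j) y) = pd i (\<lambda>y. h (g y)) y"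
      using hp_pd[OF hp_chain[OF W U Suc.prems g _ i]] by simp
    ultimately show "smk k m W (pd i (\<lambda>y. h (g y)))"
      by (rule smk_local[OF W, rotated])
  qed
qed

lemma smooth_comp:
  assumes W: "open_Rn m W" and U: "open_Rn n U" and g: "smooth_map m W n U g"
    and h: "smooth_real n U h"
  shows "smooth_real m W (\<lambda>y. h (g y))"
  using smk_comp[OF W U g h] unfolding smooth_real_smk by blast


definition cvx :: "nat \<Rightarrow> rn set \<Rightarrow> bool" where
  "cvx n S \<longleftrightarrow> S \<subseteq> Rn n \<and> (\<forall>a\<in>S. \<forall>b\<in>S. \<forall>t::real. 0 \<le> t \<and> t \<le> 1 \<longrightarrow> (\<lambda>i. a i + t * (b i - a i)) \<in> S)"

lemma open_line_pre:
  assumes A: "open_Rn n A" and a: "a \<in> Rn n" and b: "b \<in> Rn n"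
  shows "open {t::real. (\<lambda>i. a i + t * (b i - a i)) \<in> A}"
  unfolding open_dist
proof (intro ballI)
  fix t assume "t \<in> {t. (\<lambda>i. a i + t * (b i - a i)) \<in> A}"
  hence tA: "(\<lambda>i. a i + t * (b i - a i)) \<in> A" by simp
  have "\<forall>x\<in>A. \<exists>e>0. \<forall>y\<in>Rn n. (\<forall>i<n. \<bar>y i - x i\<bar> < e) \<longrightarrow> y \<in> A"
    using A unfolding open_Rn_def by blast
  from bspec[OF this tA] obtain e where e: "e > 0" "\<forall>y\<in>Rn n. (\<forall>i<n. \<bar>y i - (a i + t * (b i - a i))\<bar> < e) \<longrightarrow> y \<in> A"
    by auto
  define M where "M = 1 + (\<Sum>i<n. \<bar>b i - a i\<bar>)"
  have M: "M > 0" "\<And>i. i < n \<Longrightarrow> \<bar>b i - a i\<bar> \<le> M"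
  proof -
    show "M > 0" unfolding M_def by (simp add: add_pos_nonneg sum_nonneg)
    fix i assume "i < n"
    hence "\<bar>b i - a i\<bar> \<le> (\<Sum>i<n. \<bar>b i - a i\<bar>)"
      by (intro member_le_sum) auto
    thus "\<bar>b i - a i\<bar> \<le> M" unfolding M_def by simp
  qed
  show "\<exists>d>0. \<forall>s. dist s t < d \<longrightarrow> s \<in> {t. (\<lambda>i. a i + t * (b i - a i)) \<in> A}"
  proof (intro exI[of _ "e / M"] conjI allI impI)
    show "e / M > 0" using e M by simp
    fix s assume s: "dist s t < e / M"
    have "(\<lambda>i. a i + s * (b i - a i)) \<in> Rn n" using a b unfolding Rn_def by auto
    moreover have "\<bar>(a i + s * (b i - a i)) - (a i + t * (b i - a i))\<bar> < e" if "i < n" for i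
    proof -
      have "\<bar>(a i + s * (b i - a i)) - (a i + t * (b i - a i))\<bar> = \<bar>s - t\<bar> * \<bar>b i - a i\<bar>"
        by (simp add: abs_mult[symmetric] algebra_simps)
      also have "\<dots> \<le> \<bar>s - t\<bar> * M" using M(2)[OF that] by (simp add: mult_left_mono)
      also have "\<dots> < e / M * M" 
        using mult_strict_right_mono[OF _ M(1), of "\<bar>s - t\<bar>" "e / M"] s by (simp add: dist_real_def)
      also have "\<dots> = e" using M(1) by simp
      finally show ?thesis .
    qed
    ultimately show "s \<in> {t. (\<lambda>i. a i + t * (b i - a i)) \<in> A}" using e(2) by auto
  qed
qed

lemma connected_cvx:
  assumes "cvx n S" shows "connected_Rn n S"
  unfolding connected_Rn_def
proof
  assume "\<exists>A B. open_Rn n A \<and> open_Rn n B \<and> A \<noteq> {} \<and> B \<noteq> {} \<and> A \<inter> B = {} \<and> A \<union> B = S"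
  then obtain A B where AB: "open_Rn n A" "open_Rn n B" "A \<noteq> {}" "B \<noteq> {}" "A \<inter> B = {}" "A \<union> B = S"
    by blast
  obtain a b where ab: "a \<in> A" "b \<in> B" using AB by blast
  have SR: "S \<subseteq> Rn n" using assms unfolding cvx_def by blast
  have aR: "a \<in> Rn n" and bR: "b \<in> Rn n" using ab AB SR by auto
  let ?p = "\<lambda>t::real. (\<lambda>i. a i + t * (b i - a i))"
  have o1: "open {t. ?p t \<in> A}" by (rule open_line_pre[OF AB(1) aR bR])
  have o2: "open {t. ?p t \<in> B}" by (rule open_line_pre[OF AB(2) aR bR])
  have "{t. ?p t \<in> A} \<inter> {0..1} = {} \<or> {t. ?p t \<in> B} \<inter> {0..1} = {}"
  proof (rule connectedD[OF connected_Icc o1 o2])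
    show "{t. ?p t \<in> A} \<inter> {t. ?p t \<in> B} \<inter> {0..1} = {}" using AB(5) by auto
    show "{0..1} \<subseteq> {t. ?p t \<in> A} \<union> {t. ?p t \<in> B}"
    proof
      fix t :: real assume "t \<in> {0..1}"
      hence "?p t \<in> S" using assms ab AB(6) unfolding cvx_def by auto
      thus "t \<in> {t. ?p t \<in> A} \<union> {t. ?p t \<in> B}" using AB(6) by auto
    qed
  qed
  moreover have "0 \<in> {t. ?p t \<in> A} \<inter> {0..1}" using ab by simp
  moreover have "1 \<in> {t. ?p t \<in> B} \<inter> {0..1}" using ab by simp
  ultimately show False by blast
qed

definition bxR :: "nat \<Rightarrow> rn \<Rightarrow> real \<Rightarrow> rn set" where
  "bxR n x e = {y \<in> Rn n. \<forall>i<n. \<bar>y i - x i\<bar> < e}"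

lemma open_bxR: "open_Rn n (bxR n x e)"
  unfolding open_Rn_def bxR_def
proof (intro conjI ballI)
  fix y assume y: "y \<in> {y \<in> Rn n. \<forall>i<n. \<bar>y i - x i\<bar> < e}"
  define d where "d = Min (insert 1 ((\<lambda>i. e - \<bar>y i - x i\<bar>) ` {..<n}))"
  have d: "d > 0" using y unfolding d_def by (subst Min_gr_iff) auto
  have dl: "d \<le> e - \<bar>y i - x i\<bar>" if "i < n" for i unfolding d_def using that by (intro Min_le) auto
  show "\<exists>d>0. \<forall>z\<in>Rn n. (\<forall>i<n. \<bar>z i - y i\<bar> < d) \<longrightarrow> z \<in> {y \<in> Rn n. \<forall>i<n. \<bar>y i - x i\<bar> < e}"
  proof (intro exI[of _ d] conjI ballI impI)
    fix z assume "z \<in> Rn n" "\<forall>i<n. \<bar>z i - y i\<bar> < d"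
    thus "z \<in> {y \<in> Rn n. \<forall>i<n. \<bar>y i - x i\<bar> < e}"
      using dl by force
  qed (rule d)
qed auto

lemma cvx_bxR: "cvx n (bxR n x e)"
  unfolding cvx_def bxR_def
proof (intro conjI ballI allI impI)
  fix a b and t :: real
  assume a: "a \<in> {y \<in> Rn n. \<forall>i<n. \<bar>y i - x i\<bar> < e}" and b: "b \<in> {y \<in> Rn n. \<forall>i<n. \<bar>y i - x i\<bar> < e}"
    and t: "0 \<le> t \<and> t \<le> 1"
  have "\<bar>a i + t * (b i - a i) - x i\<bar> < e" if "i < n" for i
  proof -
    have "a i + t * (b i - a i) - x i = (1 - t) * (a i - x i) + t * (b i - x i)"
      by (simp add: algebra_simps)
    also have "\<bar>\<dots>\<bar> \<le> (1 - t) * \<bar>a i - x i\<bar> + t * \<bar>b i - x i\<bar>"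
      using t by (simp add: abs_triangle_ineq[THEN order_trans] abs_mult)
    also have "\<dots> < e"
    proof -
      have "(1 - t) * \<bar>a i - x i\<bar> \<le> (1 - t) * e" using a that t by (intro mult_left_mono) auto
      moreover have "t * \<bar>b i - x i\<bar> \<le> t * e" using b that t by (intro mult_left_mono) auto
      moreover have "(1 - t) * \<bar>a i - x i\<bar> < (1 - t) * e \<or> t * \<bar>b i - x i\<bar> < t * e"
        using a b that t by (cases "t = 1") (auto intro: mult_strict_left_mono)
      ultimately show ?thesis by (auto simp: algebra_simps)
    qed
    finally show ?thesis .
  qed
  moreover have "(\<lambda>i. a i + t * (b i - a i)) \<in> Rn n" using a b unfolding Rn_def by auto
  ultimately show "(\<lambda>i. a i + t * (b i - a i)) \<in> {y \<in> Rn n. \<forall>i<n. \<bar>y i - x i\<bar> < e}" by auto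
qed auto

lemma cvx_Rn: "cvx n (Rn n)"
  unfolding cvx_def Rn_def by auto

lemma connected_Rn_Rn: "connected_Rn n (Rn n)" by (rule connected_cvx[OF cvx_Rn])
lemma connected_bxR: "connected_Rn n (bxR n x e)" by (rule connected_cvx[OF cvx_bxR])

lemma bxR_center: "x \<in> Rn n \<Longrightarrow> e > 0 \<Longrightarrow> x \<in> bxR n x e"
  unfolding bxR_def by auto

lemma bxR_sub:
  assumes "open_Rn n U" "x \<in> U" shows "\<exists>e>0. bxR n x e \<subseteq> U"
  using assms unfolding open_Rn_def bxR_def by blast


lemma smooth_map_comp:
  assumes W: "open_Rn m W" and U: "open_Rn n U" 
    and g: "smooth_map m W n U g" and f: "smooth_map n U k V f"
  shows "smooth_map m W k V (\<lambda>x. f (g x))"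
proof -
  have a: "\<forall>u\<in>W. f (g u) \<in> V" using f g unfolding smooth_map_def by blast
  have b: "V \<subseteq> Rn k" using f unfolding smooth_map_def by blast
  have c: "\<forall>j<k. smooth_real m W (\<lambda>u. f (g u) j)"
    using smooth_comp[OF W U g smooth_map_comp_sm[OF f]] by blast
  show ?thesis unfolding smooth_map_def using a b c by blast
qed

lemma smooth_mapI:
  "(\<And>u. u \<in> W \<Longrightarrow> g u \<in> V) \<Longrightarrow> V \<subseteq> Rn k \<Longrightarrow> (\<And>j. j < k \<Longrightarrow> smooth_real m W (\<lambda>u. g u j))
   \<Longrightarrow> smooth_map m W k V g"
  unfolding smooth_map_def by blast

lemma open_pre:
  assumes W: "open_Rn m W" and N: "open_Rn n N" and g: "smooth_map m W n U g"
  shows "open_Rn m {u\<in>W. g u \<in> N}"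
  unfolding open_Rn_def
proof (intro conjI ballI)
  show "{u \<in> W. g u \<in> N} \<subseteq> Rn m" using W unfolding open_Rn_def by auto
  fix x assume x: "x \<in> {u \<in> W. g u \<in> N}"
  have UR: "U \<subseteq> Rn n" using g unfolding smooth_map_def by blast
  obtain e where e: "e > 0" "\<forall>y\<in>Rn n. (\<forall>i<n. \<bar>y i - g x i\<bar> < e) \<longrightarrow> y \<in> N"
    using N x unfolding open_Rn_def by blast
  have "eventually (\<lambda>y. y \<in> N) (nbh n U (g x))"
    unfolding eventually_nbh using e UR by blast
  hence "eventually (\<lambda>y. g y \<in> N) (nbh m W x)"
    using filterlim_smooth_map[OF g] x unfolding filterlim_iff by blast
  then obtain d where d: "d > 0" "\<forall>y\<in>W. (\<forall>i<m. \<bar>y i - x i\<bar> < d) \<longrightarrow> g y \<in> N"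
    unfolding eventually_nbh by blast
  obtain d2 where d2: "d2 > 0" "\<forall>y\<in>Rn m. (\<forall>i<m. \<bar>y i - x i\<bar> < d2) \<longrightarrow> y \<in> W"
    using W x unfolding open_Rn_def by blast
  show "\<exists>e>0. \<forall>y\<in>Rn m. (\<forall>i<m. \<bar>y i - x i\<bar> < e) \<longrightarrow> y \<in> {u \<in> W. g u \<in> N}"
    using d d2 by (intro exI[of _ "min d d2"]) auto
qed


lemma fstp_Rn: "fstp n w \<in> Rn n" unfolding fstp_def Rn_def by auto

lemma smooth_map_fstp:
  assumes W: "open_Rn (2*n) W" and "\<forall>w\<in>W. fstp n w \<in> U" "U \<subseteq> Rn n"
  shows "smooth_map (2*n) W n U (fstp n)"
proof (rule smooth_mapI)
  fix j assume "j < n"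
  hence "(\<lambda>u. fstp n u j) = (\<lambda>u. u j)" unfolding fstp_def by auto
  thus "smooth_real (2*n) W (\<lambda>u. fstp n u j)" using smooth_coord[OF W] by simp
qed (use assms in auto)

lemma tanU_eq: "tanU n U = {w \<in> Rn (2*n). fstp n w \<in> U}" unfolding tanU_def by simp

lemma open_tanU:
  assumes U: "open_Rn n U" shows "open_Rn (2*n) (tanU n U)"
proof -
  have "open_Rn (2*n) {w \<in> Rn (2*n). fstp n w \<in> U}"
    by (rule open_pre[OF open_Rn_Rn U smooth_map_fstp[OF open_Rn_Rn, where U="Rn n"]]) (auto simp: fstp_Rn)
  thus ?thesis unfolding tanU_eq .
qed

definition addv :: "rn \<Rightarrow> rn \<Rightarrow> rn" where "addv u y = (\<lambda>i. y i + u i)"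

lemma addv_Rn: "u \<in> Rn n \<Longrightarrow> y \<in> Rn n \<Longrightarrow> addv u y \<in> Rn n"
  unfolding addv_def Rn_def by auto

lemma smooth_real_affine: "open_Rn n U \<Longrightarrow> smooth_real n U (\<lambda>y. y j + c)"
  by (intro smooth_add smooth_coord smooth_const)

lemma smooth_map_addv:
  assumes W: "open_Rn n W" and "\<forall>w\<in>W. addv u w \<in> U" "U \<subseteq> Rn n"
  shows "smooth_map n W n U (addv u)"
proof (rule smooth_mapI)
  fix j assume "j < n"
  show "smooth_real n W (\<lambda>y. addv u y j)" unfolding addv_def using smooth_real_affine[OF W] .
qed (use assms in auto)

lemma tr_eq:
  assumes "u \<in> Rn n" "U \<subseteq> Rn n"
  shows "(\<lambda>y i. y i - u i) ` U = {y \<in> Rn n. addv u y \<in> U}"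
proof
  show "(\<lambda>y i. y i - u i) ` U \<subseteq> {y \<in> Rn n. addv u y \<in> U}"
  proof
    fix y assume "y \<in> (\<lambda>y i. y i - u i) ` U"
    then obtain x where x: "x \<in> U" "y = (\<lambda>i. x i - u i)" by blast
    have "addv u y = x" unfolding addv_def x(2) by auto
    thus "y \<in> {y \<in> Rn n. addv u y \<in> U}" using x assms unfolding Rn_def by auto
  qed
  show "{y \<in> Rn n. addv u y \<in> U} \<subseteq> (\<lambda>y i. y i - u i) ` U"
  proof
    fix y assume y: "y \<in> {y \<in> Rn n. addv u y \<in> U}"
    have "y = (\<lambda>i. addv u y i - u i)" unfolding addv_def by auto
    thus "y \<in> (\<lambda>y i. y i - u i) ` U" using y by blast
  qed
qed

lemma open_tr:
  assumes U: "open_Rn n U" and u: "u \<in> Rn n"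
  shows "open_Rn n {y \<in> Rn n. addv u y \<in> U}"
proof -
  have UR: "U \<subseteq> Rn n" using U unfolding open_Rn_def by auto
  show ?thesis
    by (rule open_pre[OF open_Rn_Rn U smooth_map_addv[OF open_Rn_Rn, where U="Rn n"]])
       (use u in \<open>auto simp: addv_Rn\<close>)
qed

lemma addv_cancel: "addv (\<lambda>i. - u i) (addv u y) = y" "addv u (addv (\<lambda>i. - u i) y) = y"
  unfolding addv_def by auto

lemma connected_tr:
  assumes U: "open_Rn n U" and C: "connected_Rn n U" and u: "u \<in> Rn n"
  shows "connected_Rn n {y \<in> Rn n. addv u y \<in> U}"
  unfolding connected_Rn_def
proof
  assume "\<exists>A B. open_Rn n A \<and> open_Rn n B \<and> A \<noteq> {} \<and> B \<noteq> {} \<and> A \<inter> B = {} \<and>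
     A \<union> B = {y \<in> Rn n. addv u y \<in> U}"
  then obtain A B where AB: "open_Rn n A" "open_Rn n B" "A \<noteq> {}" "B \<noteq> {}" "A \<inter> B = {}"
    "A \<union> B = {y \<in> Rn n. addv u y \<in> U}" by blast
  define v where "v = (\<lambda>i. - u i)"
  have v: "v \<in> Rn n" using u unfolding v_def Rn_def by auto
  let ?A = "{y \<in> Rn n. addv v y \<in> A}" and ?B = "{y \<in> Rn n. addv v y \<in> B}"
  have "open_Rn n ?A" "open_Rn n ?B" using open_tr[OF AB(1) v] open_tr[OF AB(2) v] .
  moreover have "?A \<noteq> {}"
  proof -
    obtain a where a: "a \<in> A" using AB by blast
    hence aR: "a \<in> Rn n" using AB(1) unfolding open_Rn_def by auto
    have "addv v (addv u a) = a" unfolding v_def by (rule addv_cancel(1))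
    hence "addv u a \<in> ?A" using a aR u addv_Rn by auto
    thus ?thesis by blast
  qed
  moreover have "?B \<noteq> {}"
  proof -
    obtain a where a: "a \<in> B" using AB by blast
    hence aR: "a \<in> Rn n" using AB(2) unfolding open_Rn_def by auto
    have "addv v (addv u a) = a" unfolding v_def by (rule addv_cancel(1))
    hence "addv u a \<in> ?B" using a aR u addv_Rn by auto
    thus ?thesis by blast
  qed
  moreover have "?A \<inter> ?B = {}" using AB(5) by auto
  moreover have "?A \<union> ?B = U"
  proof
    show "?A \<union> ?B \<subseteq> U"
    proof
      fix x assume x: "x \<in> ?A \<union> ?B"
      hence "addv v x \<in> A \<union> B" by auto
      hence "addv u (addv v x) \<in> U" using AB(6) by auto
      thus "x \<in> U" unfolding v_def addv_cancel .
    qed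
    show "U \<subseteq> ?A \<union> ?B"
    proof
      fix y assume y: "y \<in> U"
      hence yR: "y \<in> Rn n" using U unfolding open_Rn_def by auto
      have "addv v y \<in> Rn n" using addv_Rn[OF v yR] .
      moreover have "addv u (addv v y) \<in> U" using y unfolding v_def addv_cancel .
      ultimately have "addv v y \<in> A \<union> B" using AB(6) by blast
      thus "y \<in> ?A \<union> ?B" using yR by auto
    qed
  qed
  ultimately show False using C unfolding connected_Rn_def by blast
qed


lemma sum_lessThan_add: "(\<Sum>k<a+b. f k) = (\<Sum>k<a. f k) + (\<Sum>k<b. f (a + k))" for a b :: nat
  by (induction b) (auto simp: add.assoc)

definition lrep :: "nat \<Rightarrow> rn set \<Rightarrow> (rn \<Rightarrow> 'v::real_vector) \<Rightarrow> bool" where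
  "lrep n N p \<longleftrightarrow> (\<exists>ws :: 'v list. \<exists>r. (\<forall>k<length ws. smooth_real n N (r k)) \<and>
      (\<forall>y\<in>N. p y = (\<Sum>k<length ws. r k y *\<^sub>R ws ! k)))"

lemma lrep_sub: "lrep n N p \<Longrightarrow> N' \<subseteq> N \<Longrightarrow> lrep n N' p"
  unfolding lrep_def using smooth_sub by blast

lemma lrep_local: "lrep n N p \<Longrightarrow> \<forall>y\<in>N. p y = q y \<Longrightarrow> lrep n N q"
  unfolding lrep_def by auto

lemma lrep_const: "lrep n N (\<lambda>_. x)"
  unfolding lrep_def by (rule exI[of _ "[x]"], rule exI[of _ "\<lambda>_ _. 1"]) auto

lemma lrep_add:
  assumes "lrep n N p" "lrep n N q" "open_Rn n N"
  shows "lrep n N (\<lambda>y. p y + q y)"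
proof -
  obtain ws r where w: "\<forall>k<length ws. smooth_real n N (r k)" "\<forall>y\<in>N. p y = (\<Sum>k<length ws. r k y *\<^sub>R ws ! k)"
    using assms(1) unfolding lrep_def by blast
  obtain vs s where v: "\<forall>k<length vs. smooth_real n N (s k)" "\<forall>y\<in>N. q y = (\<Sum>k<length vs. s k y *\<^sub>R vs ! k)"
    using assms(2) unfolding lrep_def by blast
  define t where "t k = (if k < length ws then r k else s (k - length ws))" for k
  show ?thesis unfolding lrep_def
  proof (intro exI[of _ "ws @ vs"] exI[of _ t] conjI allI impI ballI)
    fix k assume "k < length (ws @ vs)"
    thus "smooth_real n N (t k)" using w v unfolding t_def by auto
  next
    fix y assume y: "y \<in> N"
    have "(\<Sum>k<length (ws @ vs). t k y *\<^sub>R (ws @ vs) ! k) =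
       (\<Sum>k<length ws. t k y *\<^sub>R (ws @ vs) ! k) + (\<Sum>k<length vs. t (length ws + k) y *\<^sub>R (ws @ vs) ! (length ws + k))"
      by (simp add: sum_lessThan_add)
    also have "\<dots> = p y + q y"
      using w(2) v(2) y unfolding t_def by (auto simp: nth_append)
    finally show "p y + q y = (\<Sum>k<length (ws @ vs). t k y *\<^sub>R (ws @ vs) ! k)" by simp
  qed
qed

lemma lrep_scale:
  assumes "lrep n N p" "smooth_real n N r0" "open_Rn n N"
  shows "lrep n N (\<lambda>y. r0 y *\<^sub>R p y)"
proof -
  obtain ws r where w: "\<forall>k<length ws. smooth_real n N (r k)" "\<forall>y\<in>N. p y = (\<Sum>k<length ws. r k y *\<^sub>R ws ! k)"
    using assms(1) unfolding lrep_def by blast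
  show ?thesis unfolding lrep_def
  proof (intro exI[of _ ws] exI[of _ "\<lambda>k y. r0 y * r k y"] conjI allI impI ballI)
    fix k assume "k < length ws"
    thus "smooth_real n N (\<lambda>y. r0 y * r k y)" using w assms by (auto intro: smooth_mult)
  next
    fix y assume "y \<in> N"
    thus "r0 y *\<^sub>R p y = (\<Sum>k<length ws. (r0 y * r k y) *\<^sub>R ws ! k)"
      using w(2) by (simp add: scaleR_sum_right)
  qed
qed

lemma lrep_comp:
  assumes "lrep n N p" "open_Rn m W" "open_Rn n N" "smooth_map m W n N f"
  shows "lrep m W (\<lambda>y. p (f y))"
proof -
  obtain ws r where w: "\<forall>k<length ws. smooth_real n N (r k)" "\<forall>y\<in>N. p y = (\<Sum>k<length ws. r k y *\<^sub>R ws ! k)"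
    using assms(1) unfolding lrep_def by blast
  have fW: "\<forall>u\<in>W. f u \<in> N" using assms(4) unfolding smooth_map_def by blast
  show ?thesis unfolding lrep_def
  proof (intro exI[of _ ws] exI[of _ "\<lambda>k y. r k (f y)"] conjI allI impI ballI)
    fix k assume "k < length ws"
    thus "smooth_real m W (\<lambda>y. r k (f y))" using w smooth_comp[OF assms(2,3,4)] by blast
  next
    fix y assume "y \<in> W"
    thus "p (f y) = (\<Sum>k<length ws. r k (f y) *\<^sub>R ws ! k)" using w(2) fW by blast
  qed
qed

definition FP :: "nat \<Rightarrow> rn set \<Rightarrow> (rn \<Rightarrow> 'v::real_vector) \<Rightarrow> bool" where
  "FP n U p \<longleftrightarrow> open_Rn n U \<and> (\<forall>u\<in>U. \<exists>N. open_Rn n N \<and> u \<in> N \<and> N \<subseteq> U \<and> lrep n N p)"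

lemma smooth_map_restrict:
  assumes "smooth_map m W n U f" "W' \<subseteq> W" "\<forall>u\<in>W'. f u \<in> N" "N \<subseteq> U"
  shows "smooth_map m W' n N f"
  using assms unfolding smooth_map_def using smooth_sub by blast

lemma FP_diffeology: "diffeology UNIV (FP :: nat \<Rightarrow> rn set \<Rightarrow> (rn \<Rightarrow> 'v::real_vector) \<Rightarrow> bool)"
  unfolding diffeology_def
proof (intro conjI allI impI)
  fix n U and p :: "rn \<Rightarrow> 'v"
  assume "FP n U p" thus "open_Rn n U" unfolding FP_def by auto
next
  fix n U and p :: "rn \<Rightarrow> 'v"
  show "\<forall>u\<in>U. p u \<in> UNIV" by simp
next
  fix n U and p q :: "rn \<Rightarrow> 'v"
  assume a: "FP n U p \<and> (\<forall>u\<in>U. q u = p u)"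
  show "FP n U q" unfolding FP_def
  proof (intro conjI ballI)
    show "open_Rn n U" using a unfolding FP_def by blast
    fix u assume "u \<in> U"
    then obtain N where N: "open_Rn n N" "u \<in> N" "N \<subseteq> U" "lrep n N p" using a unfolding FP_def by blast
    thus "\<exists>N. open_Rn n N \<and> u \<in> N \<and> N \<subseteq> U \<and> lrep n N q"
      using a lrep_local[OF N(4)] by (metis subsetD)
  qed
next
  fix n U and x :: 'v
  assume "open_Rn n U \<and> x \<in> UNIV"
  thus "FP n U (\<lambda>_. x)" unfolding FP_def using lrep_const by blast
next
  fix n U and p :: "rn \<Rightarrow> 'v" and m W f
  assume a: "FP n U p \<and> open_Rn m W \<and> smooth_map m W n U f"
  show "FP m W (p \<circ> f)" unfolding FP_def
  proof (intro conjI ballI)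
    show "open_Rn m W" using a by blast
    fix w assume w: "w \<in> W"
    have fW: "f w \<in> U" using a w unfolding smooth_map_def by blast
    then obtain N where N: "open_Rn n N" "f w \<in> N" "N \<subseteq> U" "lrep n N p" using a unfolding FP_def by blast
    define W' where "W' = {u \<in> W. f u \<in> N}"
    have W': "open_Rn m W'" unfolding W'_def using open_pre[OF _ N(1)] a by blast
    have "smooth_map m W' n N f"
      using smooth_map_restrict[of m W n U f W' N] a N unfolding W'_def by blast
    hence "lrep m W' (\<lambda>y. p (f y))" using lrep_comp[OF N(4) W' N(1)] by blast
    moreover have "w \<in> W'" "W' \<subseteq> W" unfolding W'_def using w N(2) by auto
    ultimately show "\<exists>N. open_Rn m N \<and> w \<in> N \<and> N \<subseteq> W \<and> lrep m N (p \<circ> f)"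
      using W' unfolding comp_def by blast
  qed
next
  fix n U and p :: "rn \<Rightarrow> 'v"
  assume a: "open_Rn n U \<and> (\<forall>u\<in>U. p u \<in> UNIV) \<and> (\<forall>u\<in>U. \<exists>W. open_Rn n W \<and> u \<in> W \<and> W \<subseteq> U \<and> FP n W p)"
  show "FP n U p" unfolding FP_def
  proof (intro conjI ballI)
    show "open_Rn n U" using a by blast
    fix u assume "u \<in> U"
    then obtain W where W: "open_Rn n W" "u \<in> W" "W \<subseteq> U" "FP n W p" using a by blast
    then obtain N where "open_Rn n N" "u \<in> N" "N \<subseteq> W" "lrep n N p" unfolding FP_def by blast
    thus "\<exists>N. open_Rn n N \<and> u \<in> N \<and> N \<subseteq> U \<and> lrep n N p" using W(3) by blast
  qed
qed

lemma FP_dvs: "dvs_diffeology (FP :: nat \<Rightarrow> rn set \<Rightarrow> (rn \<Rightarrow> 'v::real_vector) \<Rightarrow> bool)"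
  unfolding dvs_diffeology_def
proof (intro conjI allI impI FP_diffeology)
  fix n U and p q :: "rn \<Rightarrow> 'v"
  assume a: "FP n U p \<and> FP n U q"
  show "FP n U (\<lambda>u. p u + q u)" unfolding FP_def
  proof (intro conjI ballI)
    show "open_Rn n U" using a unfolding FP_def by blast
    fix u assume "u \<in> U"
    then obtain N1 N2 where N: "open_Rn n N1" "u \<in> N1" "N1 \<subseteq> U" "lrep n N1 p"
      "open_Rn n N2" "u \<in> N2" "N2 \<subseteq> U" "lrep n N2 q" using a unfolding FP_def by meson
    have o: "open_Rn n (N1 \<inter> N2)" using open_Rn_Int N by blast
    have "lrep n (N1 \<inter> N2) (\<lambda>u. p u + q u)"
      using lrep_add[OF lrep_sub[OF N(4)] lrep_sub[OF N(8)] o] by blast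
    thus "\<exists>N. open_Rn n N \<and> u \<in> N \<and> N \<subseteq> U \<and> lrep n N (\<lambda>u. p u + q u)"
      using o N by (intro exI[of _ "N1 \<inter> N2"]) auto
  qed
next
  fix n U r and p :: "rn \<Rightarrow> 'v"
  assume a: "open_Rn n U \<and> smooth_real n U r \<and> FP n U p"
  show "FP n U (\<lambda>u. r u *\<^sub>R p u)" unfolding FP_def
  proof (intro conjI ballI)
    show "open_Rn n U" using a by blast
    fix u assume "u \<in> U"
    then obtain N where N: "open_Rn n N" "u \<in> N" "N \<subseteq> U" "lrep n N p" using a unfolding FP_def by blast
    have "lrep n N (\<lambda>u. r u *\<^sub>R p u)" using lrep_scale[OF N(4) smooth_sub[OF N(3)] N(1)] a by blast
    thus "\<exists>N. open_Rn n N \<and> u \<in> N \<and> N \<subseteq> U \<and> lrep n N (\<lambda>u. r u *\<^sub>R p u)" using N by blast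
  qed
qed

lemma fine_FP: "fine_diffeology D \<Longrightarrow> D n U p \<Longrightarrow> FP n U p"
proof -
  assume "fine_diffeology D" "D n U p"
  hence "\<forall>D'. dvs_diffeology D' \<longrightarrow> (\<forall>n U p. D n U p \<longrightarrow> D' n U p)"
    unfolding fine_diffeology_def by blast
  from spec[OF this, of FP] FP_dvs \<open>D n U p\<close> show ?thesis by blast
qed

lemma fine_dvs: "fine_diffeology D \<Longrightarrow> dvs_diffeology D"
  unfolding fine_diffeology_def by blast

lemma diff_parts:
  assumes "diffeology X D"
  shows "\<forall>n U p. D n U p \<longrightarrow> open_Rn n U \<and> (\<forall>u\<in>U. p u \<in> X)"
    "\<forall>n U p q. D n U p \<and> (\<forall>u\<in>U. q u = p u) \<longrightarrow> D n U q"
    "\<forall>n U x. open_Rn n U \<and> x \<in> X \<longrightarrow> D n U (\<lambda>_. x)"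
    "\<forall>n U p m W f. D n U p \<and> open_Rn m W \<and> smooth_map m W n U f \<longrightarrow> D m W (p \<circ> f)"
    "\<forall>n U p. open_Rn n U \<and> (\<forall>u\<in>U. p u \<in> X) \<and>
        (\<forall>u\<in>U. \<exists>W. open_Rn n W \<and> u \<in> W \<and> W \<subseteq> U \<and> D n W p) \<longrightarrow> D n U p"
  using assms unfolding diffeology_def apply -
  apply (elim conjE, assumption)+
  done

lemma diff_const: "diffeology X D \<Longrightarrow> open_Rn n U \<Longrightarrow> x \<in> X \<Longrightarrow> D n U (\<lambda>_. x)"
  using diff_parts(3) by blast

lemma diff_comp: "diffeology X D \<Longrightarrow> D n U p \<Longrightarrow> open_Rn m W \<Longrightarrow> smooth_map m W n U f \<Longrightarrow> D m W (p \<circ> f)"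
  using diff_parts(4) by blast

lemma diff_open: "diffeology X D \<Longrightarrow> D n U p \<Longrightarrow> open_Rn n U"
  using diff_parts(1) by blast

lemma diff_vals: "diffeology X D \<Longrightarrow> D n U p \<Longrightarrow> u \<in> U \<Longrightarrow> p u \<in> X"
  using diff_parts(1) by blast

lemma diff_sheaf: "diffeology X D \<Longrightarrow> open_Rn n U \<Longrightarrow> (\<forall>u\<in>U. p u \<in> X) \<Longrightarrow>
   (\<forall>u\<in>U. \<exists>W. open_Rn n W \<and> u \<in> W \<and> W \<subseteq> U \<and> D n W p) \<Longrightarrow> D n U p"
  using diff_parts(5) by blast

lemma dvs_diff: "dvs_diffeology D \<Longrightarrow> diffeology UNIV D"
  unfolding dvs_diffeology_def by blast

lemma dvs_add: "dvs_diffeology D \<Longrightarrow> D n U p \<Longrightarrow> D n U q \<Longrightarrow> D n U (\<lambda>u. p u + q u)"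
  unfolding dvs_diffeology_def by blast

lemma dvs_scale: "dvs_diffeology D \<Longrightarrow> open_Rn n U \<Longrightarrow> smooth_real n U r \<Longrightarrow> D n U p \<Longrightarrow> D n U (\<lambda>u. r u *\<^sub>R p u)"
  unfolding dvs_diffeology_def by blast

lemma dvs_lincomb:
  fixes K :: nat
  assumes D: "dvs_diffeology D" and N: "open_Rn n N"
    and r: "\<forall>k<K. smooth_real n N (r k)"
  shows "D n N (\<lambda>y. \<Sum>k<K. r k y *\<^sub>R (ws k :: 'v::real_vector))"
  using r
proof (induction K)
  case 0
  have "D n N (\<lambda>_. 0)" using diff_const[OF dvs_diff[OF D] N] by blast
  thus ?case by simp
next
  case (Suc K)
  have c: "D n N (\<lambda>_. ws K)" using diff_const[OF dvs_diff[OF D] N] by blast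
  have "D n N (\<lambda>y. r K y *\<^sub>R ws K)" using dvs_scale[OF D N _ c] Suc.prems by blast
  moreover have "D n N (\<lambda>y. \<Sum>k<K. r k y *\<^sub>R ws k)" using Suc by auto
  ultimately have "D n N (\<lambda>y. (\<Sum>k<K. r k y *\<^sub>R ws k) + r K y *\<^sub>R ws K)"
    using dvs_add[OF D] by blast
  thus ?case by simp
qed

lemma diff_agree: "diffeology X D \<Longrightarrow> D n U p \<Longrightarrow> \<forall>u\<in>U. q u = p u \<Longrightarrow> D n U q"
  using diff_parts(2) by blast

lemma FP_D:
  assumes D: "dvs_diffeology D" and F: "FP n U (p :: rn \<Rightarrow> 'v::real_vector)"
  shows "D n U p"
proof -
  have dD: "diffeology UNIV D" using D unfolding dvs_diffeology_def by blast
  have "\<forall>u\<in>U. \<exists>W. open_Rn n W \<and> u \<in> W \<and> W \<subseteq> U \<and> D n W p"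
  proof
    fix u assume "u \<in> U"
    then obtain N where N: "open_Rn n N" "u \<in> N" "N \<subseteq> U" "lrep n N p" using F unfolding FP_def by blast
    then obtain ws r where w: "\<forall>k<length ws. smooth_real n N (r k)" "\<forall>y\<in>N. p y = (\<Sum>k<length ws. r k y *\<^sub>R ws ! k)"
      unfolding lrep_def by blast
    have "D n N (\<lambda>y. \<Sum>k<length ws. r k y *\<^sub>R ws ! k)"
      using dvs_lincomb[OF D N(1) w(1), of "\<lambda>k. ws ! k"] by simp
    hence "D n N p" using diff_agree[OF dD _ w(2)] by blast
    thus "\<exists>W. open_Rn n W \<and> u \<in> W \<and> W \<subseteq> U \<and> D n W p" using N by blast
  qed
  moreover have "open_Rn n U" using F unfolding FP_def by blast
  ultimately show ?thesis using diff_sheaf[OF dD] by blast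
qed


lemma separate:
  fixes w :: "'v::real_vector"
  assumes "\<forall>l::'v \<Rightarrow> real. linear l \<longrightarrow> l w = 0"
  shows "w = 0"
proof (rule ccontr)
  assume "w \<noteq> 0"
  hence "independent {w}" using real_vector.independent_insert[of w "{}"] real_vector.independent_empty real_vector.span_empty by simp
  from real_vector.linear_independent_extend[OF this, of "\<lambda>_. 1"]
  obtain g :: "'v \<Rightarrow> real" where "linear g" "\<forall>x\<in>{w}. g x = 1" by blast
  thus False using assms by auto
qed

definition ddP :: "nat \<Rightarrow> (rn \<Rightarrow> 'v::real_vector) \<Rightarrow> rn \<Rightarrow> 'v \<Rightarrow> bool" where
  "ddP n p v w \<longleftrightarrow> (\<forall>l::'v \<Rightarrow> real. linear l \<longrightarrow> l w = (\<Sum>i<n. pd i (\<lambda>y. l (p y)) orig * v i))"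

definition dd :: "nat \<Rightarrow> (rn \<Rightarrow> 'v::real_vector) \<Rightarrow> rn \<Rightarrow> 'v" where
  "dd n p v = (THE w. ddP n p v w)"

lemma ddP_unique: fixes w1 w2 :: "'v::real_vector" shows "ddP n p v w1 \<Longrightarrow> ddP n p v w2 \<Longrightarrow> w1 = w2"
proof -
  assume a: "ddP n p v w1" "ddP n p v w2"
  have "\<forall>l::'v \<Rightarrow> real. linear l \<longrightarrow> l (w1 - w2) = 0"
    using a unfolding ddP_def by (simp add: linear_diff)
  thus ?thesis using separate[of "w1 - w2"] by simp
qed

lemma dd_eq: "ddP n p v w \<Longrightarrow> dd n p v = w"
  unfolding dd_def using ddP_unique by blast

lemma dd_ex: "ddP n p v w \<Longrightarrow> ddP n p v (dd n p v)"
proof -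
  assume a: "ddP n p v w"
  have "dd n p v = w" by (rule dd_eq[OF a])
  thus ?thesis using a by simp
qed

lemma dd_zero: "dd n p orig = 0"
  by (rule dd_eq) (simp add: ddP_def orig_def linear_0)

definition goodp :: "nat \<Rightarrow> (rn \<Rightarrow> 'v::real_vector) \<Rightarrow> bool" where
  "goodp n p \<longleftrightarrow> (\<exists>N. open_Rn n N \<and> orig \<in> N \<and> lrep n N p)"

lemma hp_sum: "finite S \<Longrightarrow> (\<And>k. k \<in> S \<Longrightarrow> hp i (f k) x (D k)) \<Longrightarrow> hp i (\<lambda>y. \<Sum>k\<in>S. f k y) x (\<Sum>k\<in>S. D k)"
  by (rule DERIV_sum) auto

lemma hp_cmult: "hp i f x D \<Longrightarrow> hp i (\<lambda>y. f y * c) x (D * c)"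
  by (rule DERIV_cmult_right)

lemma ddP_rep:
  fixes K :: nat and ws :: "nat \<Rightarrow> 'v::real_vector"
  assumes N: "open_Rn n N" "orig \<in> N" and r: "\<forall>k<K. smooth_real n N (r k)"
    and p: "\<forall>y\<in>N. p y = (\<Sum>k<K. r k y *\<^sub>R ws k)"
  shows "ddP n p v (\<Sum>k<K. (\<Sum>i<n. pd i (r k) orig * v i) *\<^sub>R ws k)"
  unfolding ddP_def
proof (intro allI impI)
  fix l :: "'v \<Rightarrow> real" assume l: "linear l"
  have lp: "\<forall>y\<in>N. l (p y) = (\<Sum>k<K. r k y * l (ws k))"
    using p l by (simp add: linear_sum linear_scale)
  have pdi: "pd i (\<lambda>y. l (p y)) orig = (\<Sum>k<K. pd i (r k) orig * l (ws k))" if i: "i < n" for i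
  proof -
    have "pd i (\<lambda>y. l (p y)) orig = pd i (\<lambda>y. \<Sum>k<K. r k y * l (ws k)) orig"
      by (rule pd_local[OF N i lp])
    also have "\<dots> = (\<Sum>k<K. pd i (r k) orig * l (ws k))"
    proof (rule hp_pd, rule hp_sum)
      fix k assume "k \<in> {..<K}"
      hence "smooth_real n N (r k)" using r by auto
      from hp_cmult[OF smooth_hp[OF this i N(2)]]
      show "hp i (\<lambda>y. r k y * l (ws k)) orig (pd i (r k) orig * l (ws k))" .
    qed simp
    finally show ?thesis .
  qed
  have "l (\<Sum>k<K. (\<Sum>i<n. pd i (r k) orig * v i) *\<^sub>R ws k) = (\<Sum>k<K. (\<Sum>i<n. pd i (r k) orig * v i) * l (ws k))"
    using l by (simp add: linear_sum linear_scale)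
  also have "\<dots> = (\<Sum>k<K. \<Sum>i<n. pd i (r k) orig * l (ws k) * v i)"
    by (simp add: sum_distrib_right sum_distrib_left mult.commute mult.left_commute)
  also have "\<dots> = (\<Sum>i<n. \<Sum>k<K. pd i (r k) orig * l (ws k) * v i)"
    by (rule sum.swap)
  also have "\<dots> = (\<Sum>i<n. (\<Sum>k<K. pd i (r k) orig * l (ws k)) * v i)"
    by (simp add: sum_distrib_right)
  also have "\<dots> = (\<Sum>i<n. pd i (\<lambda>y. l (p y)) orig * v i)"
    using pdi by simp
  finally show "l (\<Sum>k<K. (\<Sum>i<n. pd i (r k) orig * v i) *\<^sub>R ws k) = (\<Sum>i<n. pd i (\<lambda>y. l (p y)) orig * v i)" .
qed

lemma good_ddP: "goodp n p \<Longrightarrow> ddP n p v (dd n p v)"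
proof -
  assume "goodp n p"
  then obtain N ws r where N: "open_Rn n N" "orig \<in> N" and
    w: "\<forall>k<length ws. smooth_real n N (r k)" "\<forall>y\<in>N. p y = (\<Sum>k<length ws. r k y *\<^sub>R ws ! k)"
    unfolding goodp_def lrep_def by blast
  from ddP_rep[OF N w(1), of p "\<lambda>k. ws ! k"] w(2) show ?thesis using dd_ex by blast
qed

lemma dd_add: "goodp n p \<Longrightarrow> dd n p (\<lambda>i. a i + b i) = dd n p a + dd n p b"
proof (rule dd_eq)
  assume g: "goodp n p"
  show "ddP n p (\<lambda>i. a i + b i) (dd n p a + dd n p b)"
    using good_ddP[OF g, of a] good_ddP[OF g, of b] unfolding ddP_def
    by (simp add: linear_add algebra_simps sum.distrib)
qed

lemma dd_scale: "goodp n p \<Longrightarrow> dd n p (\<lambda>i. c * a i) = c *\<^sub>R dd n p a"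
proof (rule dd_eq)
  assume g: "goodp n p"
  show "ddP n p (\<lambda>i. c * a i) (c *\<^sub>R dd n p a)"
    unfolding ddP_def
  proof (intro allI impI)
    fix l :: "'a \<Rightarrow> real" assume l: "linear l"
    have "l (dd n p a) = (\<Sum>i<n. pd i (\<lambda>y. l (p y)) orig * a i)"
      using good_ddP[OF g, of a] l unfolding ddP_def by blast
    hence "l (c *\<^sub>R dd n p a) = c * (\<Sum>i<n. pd i (\<lambda>y. l (p y)) orig * a i)"
      using l by (simp add: linear_scale)
    thus "l (c *\<^sub>R dd n p a) = (\<Sum>i<n. pd i (\<lambda>y. l (p y)) orig * (c * a i))"
      by (simp add: sum_distrib_left mult.left_commute)
  qed
qed

lemma dd_diff: "goodp n p \<Longrightarrow> dd n p (\<lambda>i. a i - b i) = dd n p a - dd n p b"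
proof (rule dd_eq)
  assume g: "goodp n p"
  show "ddP n p (\<lambda>i. a i - b i) (dd n p a - dd n p b)"
    using good_ddP[OF g, of a] good_ddP[OF g, of b] unfolding ddP_def
    by (simp add: linear_diff algebra_simps sum_subtractf)
qed

lemma dd_rep:
  fixes K :: nat and ws :: "nat \<Rightarrow> 'v::real_vector"
  assumes N: "open_Rn n N" "orig \<in> N" and r: "\<forall>k<K. smooth_real n N (r k)"
    and p: "\<forall>y\<in>N. p y = (\<Sum>k<K. r k y *\<^sub>R ws k)"
  shows "dd n p v = (\<Sum>k<K. (\<Sum>i<n. pd i (r k) orig * v i) *\<^sub>R ws k)"
  using dd_eq[OF ddP_rep[OF assms]] .

lemma dd_morph:
  fixes p p' :: "rn \<Rightarrow> 'v::real_vector"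
  assumes U: "open_Rn n U" "orig \<in> U" and U': "open_Rn n' U'"
    and f: "smooth_map n U n' U' f" and f0: "f orig = orig"
    and pp: "\<forall>u\<in>U. p' (f u) = p u"
    and g': "goodp n' p'"
  shows "dd n p v = dd n' p' (dmap n f v)"
proof (rule dd_eq)
  obtain N ws r where N: "open_Rn n' N" "orig \<in> N" and
    w: "\<forall>k<length ws. smooth_real n' N (r k)" "\<forall>y\<in>N. p' y = (\<Sum>k<length ws. r k y *\<^sub>R ws ! k)"
    using g' unfolding goodp_def lrep_def by blast
  define W where "W = {u \<in> U. f u \<in> N}"
  have W: "open_Rn n W" unfolding W_def by (rule open_pre[OF U(1) N(1) f])
  have oW: "orig \<in> W" unfolding W_def using U(2) f0 N(2) by simp
  have fW: "smooth_map n W n' N f"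
  proof (rule smooth_mapI)
    show "\<And>u. u \<in> W \<Longrightarrow> f u \<in> N" unfolding W_def by blast
    show "N \<subseteq> Rn n'" using N(1) unfolding open_Rn_def by blast
    fix j assume "j < n'"
    hence "smooth_real n U (\<lambda>u. f u j)" using smooth_map_comp_sm[OF f] by blast
    thus "smooth_real n W (\<lambda>u. f u j)" using smooth_sub[of W U] unfolding W_def by blast
  qed
  show "ddP n p v (dd n' p' (dmap n f v))" unfolding ddP_def
  proof (intro allI impI)
    fix l :: "'v \<Rightarrow> real" assume l: "linear l"
    define g where "g y = (\<Sum>k<length ws. r k y * l (ws ! k))" for y
    have gs: "smooth_real n' N g" unfolding g_def
      by (rule smooth_sum[OF _ _ N(1)]) (use w(1) N(1) in \<open>auto intro: smooth_mult\<close>)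
    have lp': "\<forall>y\<in>N. l (p' y) = g y" using w(2) l unfolding g_def by (simp add: linear_sum linear_scale)
    have e1: "l (dd n' p' (dmap n f v)) = (\<Sum>j<n'. pd j (\<lambda>y. l (p' y)) orig * dmap n f v j)"
      using good_ddP[OF g'] l unfolding ddP_def by blast
    have e2: "pd j (\<lambda>y. l (p' y)) orig = pd j g orig" if "j < n'" for j
      using pd_local[OF N that lp'] .
    have e3: "pd i (\<lambda>y. l (p y)) orig = (\<Sum>j<n'. pd j g orig * pd i (\<lambda>u. f u j) orig)" if i: "i < n" for i
    proof -
      have "\<forall>y\<in>W. l (p y) = g (f y)" using pp lp' unfolding W_def by auto
      hence "pd i (\<lambda>y. l (p y)) orig = pd i (\<lambda>y. g (f y)) orig" by (rule pd_local[OF W oW i])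
      also have "\<dots> = (\<Sum>j<n'. pd j g (f orig) * pd i (\<lambda>u. f u j) orig)"
        using hp_pd[OF hp_chain[OF W N(1) gs fW oW i]] .
      finally show ?thesis using f0 by simp
    qed
    have "l (dd n' p' (dmap n f v)) = (\<Sum>j<n'. pd j g orig * (\<Sum>i<n. pd i (\<lambda>u. f u j) orig * v i))"
      unfolding e1 by (rule sum.cong) (simp_all add: e2 dmap_def)
    also have "\<dots> = (\<Sum>j<n'. \<Sum>i<n. pd j g orig * pd i (\<lambda>u. f u j) orig * v i)"
      by (simp add: sum_distrib_left mult.assoc)
    also have "\<dots> = (\<Sum>i<n. \<Sum>j<n'. pd j g orig * pd i (\<lambda>u. f u j) orig * v i)"
      by (rule sum.swap)
    also have "\<dots> = (\<Sum>i<n. pd i (\<lambda>y. l (p y)) orig * v i)"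
      using e3 by (simp add: sum_distrib_right)
    finally show "l (dd n' p' (dmap n f v)) = (\<Sum>i<n. pd i (\<lambda>y. l (p y)) orig * v i)" .
  qed
qed


definition supp :: "('a pidx \<Rightarrow> rn) \<Rightarrow> 'a pidx set" where
  "supp s = {c. s c \<noteq> orig}"

definition Phi :: "('v::real_vector pidx \<Rightarrow> rn) \<Rightarrow> 'v" where
  "Phi s = (\<Sum>c\<in>supp s. dd (fst c) (snd (snd c)) (s c))"

abbreviation ddc :: "'v::real_vector pidx \<Rightarrow> rn \<Rightarrow> 'v" where
  "ddc c v \<equiv> dd (fst c) (snd (snd c)) v"

lemma Phi_gen:
  assumes "finite S" "supp s \<subseteq> S"
  shows "Phi s = (\<Sum>c\<in>S. ddc c (s c))"
  unfolding Phi_def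
proof (rule sum.mono_neutral_left[OF assms(1,2)])
  show "\<forall>c\<in>S - supp s. ddc c (s c) = 0" unfolding supp_def by (auto simp: dd_zero)
qed

definition goods :: "('v::real_vector pidx \<Rightarrow> rn) \<Rightarrow> bool" where
  "goods s \<longleftrightarrow> (\<forall>c\<in>supp s. goodp (fst c) (snd (snd c)))"

lemma supp_add: "supp (ds_add s t) \<subseteq> supp s \<union> supp t"
  unfolding supp_def ds_add_def orig_def by auto

lemma supp_sub: "supp (ds_sub s t) \<subseteq> supp s \<union> supp t"
  unfolding supp_def ds_sub_def orig_def by auto

lemma supp_scale: "supp (ds_scale r s) \<subseteq> supp s"
  unfolding supp_def ds_scale_def orig_def by auto

lemma supp_delta: "supp (delta c v) \<subseteq> {c}"
  unfolding supp_def delta_def by auto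

lemma supp_zero: "supp ds_zero = {}"
  unfolding supp_def ds_zero_def by auto

lemma Phi_add:
  assumes "finite (supp s)" "finite (supp t)" "goods s" "goods t"
  shows "Phi (ds_add s t) = Phi s + Phi t"
proof -
  let ?S = "supp s \<union> supp t"
  have f: "finite ?S" using assms by simp
  have "Phi (ds_add s t) = (\<Sum>c\<in>?S. ddc c (ds_add s t c))"
    by (rule Phi_gen[OF f supp_add])
  also have "\<dots> = (\<Sum>c\<in>?S. ddc c (s c) + ddc c (t c))"
  proof (rule sum.cong[OF refl])
    fix c assume c: "c \<in> ?S"
    show "ddc c (ds_add s t c) = ddc c (s c) + ddc c (t c)"
    proof (cases "c \<in> supp s")
      case True
      hence g: "goodp (fst c) (snd (snd c))" using assms(3) unfolding goods_def by blast
      show ?thesis unfolding ds_add_def by (rule dd_add[OF g])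
    next
      case False
      hence "c \<in> supp t" using c by blast
      hence g: "goodp (fst c) (snd (snd c))" using assms(4) unfolding goods_def by blast
      show ?thesis unfolding ds_add_def by (rule dd_add[OF g])
    qed
  qed
  also have "\<dots> = Phi s + Phi t"
    by (simp add: sum.distrib Phi_gen[OF f] Phi_gen[OF f, of t])
  finally show ?thesis .
qed

lemma Phi_sub:
  assumes "finite (supp s)" "finite (supp t)" "goods s" "goods t"
  shows "Phi (ds_sub s t) = Phi s - Phi t"
proof -
  let ?S = "supp s \<union> supp t"
  have f: "finite ?S" using assms by simp
  have "Phi (ds_sub s t) = (\<Sum>c\<in>?S. ddc c (ds_sub s t c))"
    by (rule Phi_gen[OF f supp_sub])
  also have "\<dots> = (\<Sum>c\<in>?S. ddc c (s c) - ddc c (t c))"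
  proof (rule sum.cong[OF refl])
    fix c assume c: "c \<in> ?S"
    show "ddc c (ds_sub s t c) = ddc c (s c) - ddc c (t c)"
    proof (cases "c \<in> supp s")
      case True
      hence g: "goodp (fst c) (snd (snd c))" using assms(3) unfolding goods_def by blast
      show ?thesis unfolding ds_sub_def by (rule dd_diff[OF g])
    next
      case False
      hence "c \<in> supp t" using c by blast
      hence g: "goodp (fst c) (snd (snd c))" using assms(4) unfolding goods_def by blast
      show ?thesis unfolding ds_sub_def by (rule dd_diff[OF g])
    qed
  qed
  also have "\<dots> = Phi s - Phi t"
    by (simp add: sum_subtractf Phi_gen[OF f] Phi_gen[OF f, of t])
  finally show ?thesis .
qed

lemma Phi_scale:
  assumes "finite (supp s)" "goods s"
  shows "Phi (ds_scale r s) = r *\<^sub>R Phi s"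
proof -
  have "Phi (ds_scale r s) = (\<Sum>c\<in>supp s. ddc c (ds_scale r s c))"
    by (rule Phi_gen[OF assms(1) supp_scale])
  also have "\<dots> = (\<Sum>c\<in>supp s. r *\<^sub>R ddc c (s c))"
  proof (rule sum.cong[OF refl])
    fix c assume c: "c \<in> supp s"
    hence g: "goodp (fst c) (snd (snd c))" using assms(2) unfolding goods_def by blast
    show "ddc c (ds_scale r s c) = r *\<^sub>R ddc c (s c)" unfolding ds_scale_def by (rule dd_scale[OF g])
  qed
  also have "\<dots> = r *\<^sub>R Phi s" unfolding Phi_def by (simp add: scaleR_sum_right)
  finally show ?thesis .
qed

lemma Phi_delta: "Phi (delta c v) = ddc c v"
proof -
  have "Phi (delta c v) = (\<Sum>c'\<in>{c}. ddc c' (delta c v c'))" by (rule Phi_gen[OF _ supp_delta]) simp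
  thus ?thesis by (simp add: delta_def)
qed

lemma finite_supp_delta: "finite (supp (delta c v))"
  by (rule finite_subset[OF supp_delta]) simp

lemma Phi_zero: "Phi ds_zero = 0"
  unfolding Phi_def supp_zero by simp

lemma goods_delta: "goodp (fst c) (snd (snd c)) \<Longrightarrow> goods (delta c v)"
  using supp_delta unfolding goods_def by blast

lemma centred_good:
  assumes "fine_diffeology D" "centred D x c"
  shows "goodp (fst c) (snd (snd c))"
proof -
  obtain n U p where c: "c = (n, U, p)" by (cases c) auto
  have Dp: "D n U p" and o: "orig \<in> U" using assms(2) unfolding c centred_def by auto
  have "FP n U p" using fine_FP[of D n U p, OF assms(1) Dp] .
  then obtain N where "open_Rn n N" "orig \<in> N" "lrep n N p" using o unfolding FP_def by blast
  thus ?thesis unfolding c goodp_def by auto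
qed

definition S0 :: "(nat \<Rightarrow> rn set \<Rightarrow> (rn \<Rightarrow> 'v::real_vector) \<Rightarrow> bool) \<Rightarrow> 'v \<Rightarrow> ('v pidx \<Rightarrow> rn) set" where
  "S0 D x = {s. finite (supp s) \<and> (\<forall>c\<in>supp s. centred D x c) \<and> Phi s = 0}"

lemma goods_centred: "fine_diffeology D \<Longrightarrow> \<forall>c\<in>supp s. centred D x c \<Longrightarrow> goods s"
  unfolding goods_def using centred_good by blast

lemma S0_subspace:
  assumes fine: "fine_diffeology D"
  shows "ds_subspace (S0 D x)"
  unfolding ds_subspace_def
proof (intro conjI ballI allI)
  show "ds_zero \<in> S0 D x" unfolding S0_def by (simp add: supp_zero Phi_zero)
next
  fix s t assume s: "s \<in> S0 D x" and t: "t \<in> S0 D x"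
  have fs: "finite (supp s)" "\<forall>c\<in>supp s. centred D x c" "Phi s = 0" using s unfolding S0_def by auto
  have ft: "finite (supp t)" "\<forall>c\<in>supp t. centred D x c" "Phi t = 0" using t unfolding S0_def by auto
  have "finite (supp (ds_add s t))" by (rule finite_subset[OF supp_add]) (use fs ft in simp)
  moreover have "\<forall>c\<in>supp (ds_add s t). centred D x c" using fs ft supp_add by blast
  moreover have "Phi (ds_add s t) = 0"
    using Phi_add[OF fs(1) ft(1) goods_centred[OF fine fs(2)] goods_centred[OF fine ft(2)]] fs ft by simp
  ultimately show "ds_add s t \<in> S0 D x" unfolding S0_def by blast
next
  fix r s assume s: "s \<in> S0 D x"
  have fs: "finite (supp s)" "\<forall>c\<in>supp s. centred D x c" "Phi s = 0" using s unfolding S0_def by auto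
  have "finite (supp (ds_scale r s))" by (rule finite_subset[OF supp_scale]) (use fs in simp)
  moreover have "\<forall>c\<in>supp (ds_scale r s). centred D x c" using fs supp_scale by blast
  moreover have "Phi (ds_scale r s) = 0" using Phi_scale[OF fs(1) goods_centred[OF fine fs(2)]] fs by simp
  ultimately show "ds_scale r s \<in> S0 D x" unfolding S0_def by blast
qed

lemma gen_S0:
  assumes fine: "fine_diffeology D" and tm: "tmorph D x c c' f"
  shows "ds_sub (delta c v) (delta c' (dmap (fst c) f v)) \<in> S0 D x"
proof -
  obtain n U p where c: "c = (n, U, p)" by (cases c) auto
  obtain n' U' p' where c': "c' = (n', U', p')" by (cases c') auto
  have cc: "centred D x c" "centred D x c'" using tm unfolding tmorph_def by auto
  have Dp: "D n U p" "orig \<in> U" using cc(1) unfolding c centred_def by auto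
  have Dp': "D n' U' p'" using cc(2) unfolding c' centred_def by auto
  have f: "smooth_map n U n' U' f" "f orig = orig" "\<forall>u\<in>U. p' (f u) = p u"
    using tm unfolding tmorph_def c c' by auto
  have g': "goodp n' p'" using centred_good[OF fine cc(2)] unfolding c' by simp
  have o1: "open_Rn n U" using fine_FP[of D n U p, OF fine Dp(1)] unfolding FP_def by (rule conjunct1)
  have o2: "open_Rn n' U'" using fine_FP[of D n' U' p', OF fine Dp'] unfolding FP_def by (rule conjunct1)
  have e: "dd n p v = dd n' p' (dmap n f v)"
    using dd_morph[OF o1 Dp(2) o2 f(1) f(2) f(3) g'] .
  let ?s = "ds_sub (delta c v) (delta c' (dmap (fst c) f v))"
  have sp1: "supp (delta c v) \<subseteq> {c}" "supp (delta c' (dmap (fst c) f v)) \<subseteq> {c'}" by (rule supp_delta)+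
  have sp: "supp ?s \<subseteq> {c, c'}" using supp_sub[of "delta c v" "delta c' (dmap (fst c) f v)"] sp1 by blast
  have gd: "goods (delta c v)" "goods (delta c' (dmap (fst c) f v))"
    by (rule goods_delta[OF centred_good[OF fine cc(1)]], rule goods_delta[OF centred_good[OF fine cc(2)]])
  have fin: "finite (supp (delta c v))" "finite (supp (delta c' (dmap (fst c) f v)))"
    by (rule finite_supp_delta)+
  have "Phi ?s = 0" using Phi_sub[OF fin gd] e unfolding Phi_delta c c' by simp
  moreover have "finite (supp ?s)" by (rule finite_subset[OF sp]) simp
  moreover have "\<forall>c''\<in>supp ?s. centred D x c''" using sp cc by blast
  ultimately show ?thesis unfolding S0_def by blast
qed

lemma REL_S0:
  assumes fine: "fine_diffeology D" shows "REL D x \<subseteq> S0 D x"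
  unfolding REL_def
  by (rule Inter_lower) (use S0_subspace[OF fine] gen_S0[OF fine] in blast)

lemma REL_mem: "(\<And>S. ds_subspace S \<Longrightarrow>
      {ds_sub (delta c v) (delta c' (dmap (fst c) f v)) | c c' f v. tmorph D x c c' f \<and> v \<in> Rn (fst c)} \<subseteq> S
      \<Longrightarrow> a \<in> S) \<Longrightarrow> a \<in> REL D x"
  unfolding REL_def by (rule InterI) simp

lemma REL_subspace: "ds_subspace (REL D x)"
  unfolding ds_subspace_def
proof (intro conjI ballI allI)
  show "ds_zero \<in> REL D x" by (rule REL_mem) (simp add: ds_subspace_def)
next
  fix s t assume "s \<in> REL D x" "t \<in> REL D x"
  thus "ds_add s t \<in> REL D x" unfolding REL_def ds_subspace_def by (intro InterI) blast
next
  fix r s assume "s \<in> REL D x"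
  thus "ds_scale r s \<in> REL D x" unfolding REL_def ds_subspace_def by (intro InterI) blast
qed

lemma gen_REL: "tmorph D x c c' f \<Longrightarrow> v \<in> Rn (fst c) \<Longrightarrow>
    ds_sub (delta c v) (delta c' (dmap (fst c) f v)) \<in> REL D x"
  by (rule REL_mem) blast

lemma REL_zero: "ds_zero \<in> REL D x" using REL_subspace[of D x, unfolded ds_subspace_def] by (rule conjunct1)
lemma REL_add: "a \<in> REL D x \<Longrightarrow> b \<in> REL D x \<Longrightarrow> ds_add a b \<in> REL D x"
proof -
  assume "a \<in> REL D x" "b \<in> REL D x"
  moreover have "\<forall>s\<in>REL D x. \<forall>t\<in>REL D x. ds_add s t \<in> REL D x"
    using REL_subspace[of D x, unfolded ds_subspace_def] by (rule conjunct2[THEN conjunct1])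
  ultimately show ?thesis by blast
qed
lemma REL_scale: "a \<in> REL D x \<Longrightarrow> ds_scale r a \<in> REL D x"
proof -
  assume "a \<in> REL D x"
  moreover have "\<forall>r. \<forall>s\<in>REL D x. ds_scale r s \<in> REL D x"
    using REL_subspace[of D x, unfolded ds_subspace_def] by (rule conjunct2[THEN conjunct2])
  ultimately show ?thesis by blast
qed

lemma ds_sub_eq: "ds_sub a b = ds_add a (ds_scale (-1) b)"
  unfolding ds_sub_def ds_add_def ds_scale_def by (simp add: fun_eq_iff)

lemma REL_sub: "a \<in> REL D x \<Longrightarrow> b \<in> REL D x \<Longrightarrow> ds_sub a b \<in> REL D x"
  unfolding ds_sub_eq by (intro REL_add REL_scale)

lemma REL_trans: "ds_sub u s \<in> REL D x \<Longrightarrow> ds_sub s t \<in> REL D x \<Longrightarrow> ds_sub u t \<in> REL D x"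
proof -
  assume "ds_sub u s \<in> REL D x" "ds_sub s t \<in> REL D x"
  hence "ds_add (ds_sub u s) (ds_sub s t) \<in> REL D x" by (rule REL_add)
  moreover have "ds_add (ds_sub u s) (ds_sub s t) = ds_sub u t"
    unfolding ds_sub_def ds_add_def by (simp add: fun_eq_iff)
  ultimately show ?thesis by simp
qed

lemma REL_sym: "ds_sub s t \<in> REL D x \<Longrightarrow> ds_sub t s \<in> REL D x"
proof -
  assume "ds_sub s t \<in> REL D x"
  hence "ds_scale (-1) (ds_sub s t) \<in> REL D x" by (rule REL_scale)
  moreover have "ds_scale (-1) (ds_sub s t) = ds_sub t s" unfolding ds_sub_def ds_scale_def by (simp add: fun_eq_iff)
  ultimately show ?thesis by simp
qed

lemma REL_refl: "ds_sub s s \<in> REL D x"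
proof -
  have "ds_sub s s = ds_zero" unfolding ds_sub_def ds_zero_def orig_def by (simp add: fun_eq_iff)
  thus ?thesis using REL_zero by simp
qed

lemma tcls_self: "s \<in> DS D x \<Longrightarrow> s \<in> tcls D x s"
  unfolding tcls_def by (simp add: REL_refl)

lemma tcls_eq: assumes "ds_sub s t \<in> REL D x" shows "tcls D x s = tcls D x t"
  unfolding tcls_def
proof (intro Collect_cong conj_cong refl iffI)
  fix u assume "ds_sub u s \<in> REL D x" thus "ds_sub u t \<in> REL D x" using REL_trans[OF _ assms] by blast
next
  fix u assume "ds_sub u t \<in> REL D x" thus "ds_sub u s \<in> REL D x" using REL_trans[OF _ REL_sym[OF assms]] by blast
qed

lemma DS_finite: "s \<in> DS D x \<Longrightarrow> finite (supp s)"
  unfolding DS_def supp_def by blast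

lemma DS_centred: "s \<in> DS D x \<Longrightarrow> \<forall>c\<in>supp s. centred D x c"
  unfolding DS_def supp_def by blast

lemma Phi_cls:
  assumes fine: "fine_diffeology D" and s: "s \<in> DS D x" and u: "u \<in> tcls D x s"
  shows "Phi u = Phi s"
proof -
  have uD: "u \<in> DS D x" and r: "ds_sub u s \<in> REL D x" using u unfolding tcls_def by auto
  have "Phi (ds_sub u s) = 0" using REL_S0[OF fine] r unfolding S0_def by blast
  moreover have "Phi (ds_sub u s) = Phi u - Phi s"
    by (rule Phi_sub[OF DS_finite[OF uD] DS_finite[OF s] goods_centred[OF fine DS_centred[OF uD]]
          goods_centred[OF fine DS_centred[OF s]]])
  ultimately show ?thesis by simp
qed

definition phi :: "(nat \<Rightarrow> rn set \<Rightarrow> (rn \<Rightarrow> 'v::real_vector) \<Rightarrow> bool) \<Rightarrow> 'v \<Rightarrow> ('v pidx \<Rightarrow> rn) set \<Rightarrow> 'v" where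
  "phi D x A = Phi (SOME s. s \<in> A)"

lemma phi_tcls:
  assumes fine: "fine_diffeology D" and s: "s \<in> DS D x"
  shows "phi D x (tcls D x s) = Phi s"
proof -
  have "(SOME t. t \<in> tcls D x s) \<in> tcls D x s" using someI[of "\<lambda>t. t \<in> tcls D x s" s] tcls_self[OF s] by blast
  thus ?thesis unfolding phi_def using Phi_cls[OF fine s] by blast
qed

lemma DS_add: "s \<in> DS D x \<Longrightarrow> t \<in> DS D x \<Longrightarrow> ds_add s t \<in> DS D x"
proof -
  assume s: "s \<in> DS D x" and t: "t \<in> DS D x"
  have "finite (supp (ds_add s t))"
    by (rule finite_subset[OF supp_add]) (use DS_finite[OF s] DS_finite[OF t] in simp)
  moreover have "\<forall>c\<in>supp (ds_add s t). centred D x c" using DS_centred[OF s] DS_centred[OF t] supp_add by blast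
  moreover have "\<forall>c. ds_add s t c \<in> Rn (fst c)" using s t unfolding DS_def ds_add_def Rn_def by auto
  ultimately show ?thesis unfolding DS_def supp_def by blast
qed

lemma DS_scale: "s \<in> DS D x \<Longrightarrow> ds_scale r s \<in> DS D x"
proof -
  assume s: "s \<in> DS D x"
  have "finite (supp (ds_scale r s))" by (rule finite_subset[OF supp_scale]) (use DS_finite[OF s] in simp)
  moreover have "\<forall>c\<in>supp (ds_scale r s). centred D x c" using DS_centred[OF s] supp_scale by blast
  moreover have "\<forall>c. ds_scale r s c \<in> Rn (fst c)" using s unfolding DS_def ds_scale_def Rn_def by auto
  ultimately show ?thesis unfolding DS_def supp_def by blast
qed

lemma DS_sub: "s \<in> DS D x \<Longrightarrow> t \<in> DS D x \<Longrightarrow> ds_sub s t \<in> DS D x"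
  unfolding ds_sub_eq by (intro DS_add DS_scale)

lemma DS_delta: "centred D x c \<Longrightarrow> v \<in> Rn (fst c) \<Longrightarrow> delta c v \<in> DS D x"
  unfolding DS_def delta_def orig_def by (auto simp: Rn_def)

lemma T_add_tcls:
  assumes s: "s \<in> DS D x" and t: "t \<in> DS D x"
  shows "T_add D x (tcls D x s) (tcls D x t) = tcls D x (ds_add s t)"
proof
  show "T_add D x (tcls D x s) (tcls D x t) \<subseteq> tcls D x (ds_add s t)"
  proof
    fix u assume "u \<in> T_add D x (tcls D x s) (tcls D x t)"
    then obtain a b where u: "u \<in> DS D x" "a \<in> tcls D x s" "b \<in> tcls D x t" "ds_sub u (ds_add a b) \<in> REL D x"
      unfolding T_add_def by blast
    have "ds_sub a s \<in> REL D x" "ds_sub b t \<in> REL D x" using u unfolding tcls_def by auto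
    hence "ds_add (ds_sub a s) (ds_sub b t) \<in> REL D x" by (rule REL_add)
    moreover have "ds_add (ds_sub a s) (ds_sub b t) = ds_sub (ds_add a b) (ds_add s t)"
      unfolding ds_sub_def ds_add_def by (simp add: fun_eq_iff)
    ultimately have "ds_sub u (ds_add s t) \<in> REL D x" using REL_trans[OF u(4)] by simp
    thus "u \<in> tcls D x (ds_add s t)" using u(1) unfolding tcls_def by blast
  qed
next
  show "tcls D x (ds_add s t) \<subseteq> T_add D x (tcls D x s) (tcls D x t)"
    unfolding T_add_def tcls_def using tcls_self[OF s] tcls_self[OF t] unfolding tcls_def by blast
qed

lemma T_scale_tcls:
  assumes s: "s \<in> DS D x"
  shows "T_scale D x r (tcls D x s) = tcls D x (ds_scale r s)"
proof
  show "T_scale D x r (tcls D x s) \<subseteq> tcls D x (ds_scale r s)"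
  proof
    fix u assume "u \<in> T_scale D x r (tcls D x s)"
    then obtain a where u: "u \<in> DS D x" "a \<in> tcls D x s" "ds_sub u (ds_scale r a) \<in> REL D x"
      unfolding T_scale_def by blast
    have "ds_sub a s \<in> REL D x" using u unfolding tcls_def by auto
    hence "ds_scale r (ds_sub a s) \<in> REL D x" by (rule REL_scale)
    moreover have "ds_scale r (ds_sub a s) = ds_sub (ds_scale r a) (ds_scale r s)"
      unfolding ds_sub_def ds_scale_def by (simp add: fun_eq_iff algebra_simps)
    ultimately have "ds_sub u (ds_scale r s) \<in> REL D x" using REL_trans[OF u(3)] by simp
    thus "u \<in> tcls D x (ds_scale r s)" using u(1) unfolding tcls_def by blast
  qed
next
  show "tcls D x (ds_scale r s) \<subseteq> T_scale D x r (tcls D x s)"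
    unfolding T_scale_def tcls_def using tcls_self[OF s] unfolding tcls_def by blast
qed


lemma sum_ind: "(\<Sum>m<K. (if i = m then 1 else 0) * c m) = (if i < K then c i else (0::real))" for K :: nat
proof -
  have "(\<Sum>m<K. (if i = m then 1 else 0) * c m) = (\<Sum>m<K. if i = m then c m else 0)"
    by (rule sum.cong) auto
  thus ?thesis by (simp add: sum.delta sum.delta')
qed

lemma sum_ind': "(\<Sum>m<K. (if m = i then 1 else 0) * c m) = (if i < K then c i else (0::real))" for K :: nat
proof -
  have "(\<Sum>m<K. (if m = i then 1 else 0) * c m) = (\<Sum>m<K. if m = i then c m else 0)"
    by (rule sum.cong) auto
  thus ?thesis by (simp add: sum.delta sum.delta')
qed

lemma hp_linf: "hp i (\<lambda>y. \<Sum>m<K. c m * y m) x (if i < K then c i else 0)"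
proof -
  have "hp i (\<lambda>y. \<Sum>m\<in>{..<K}. y m * c m) x (\<Sum>m\<in>{..<K}. (if i = m then 1 else 0) * c m)"
  proof (rule hp_sum)
    fix m show "hp i (\<lambda>y. y m * c m) x ((if i = m then 1 else 0) * c m)" by (rule hp_cmult[OF hp_coord])
  qed simp
  thus ?thesis unfolding sum_ind by (simp add: mult.commute)
qed

lemma pd_linf: "pd i (\<lambda>y. \<Sum>m<K. c m * y m) x = (if i < K then c i else 0)"
  by (rule hp_pd[OF hp_linf])

lemma smooth_linf: "open_Rn n W \<Longrightarrow> smooth_real n W (\<lambda>y. \<Sum>m<K. c m * y m)"
  by (rule smooth_sum) (auto intro: smooth_mult smooth_coord)

definition linmap :: "nat \<Rightarrow> nat \<Rightarrow> (nat \<Rightarrow> nat \<Rightarrow> real) \<Rightarrow> rn \<Rightarrow> rn" where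
  "linmap K' K M y = (\<lambda>j. if j < K' then \<Sum>m<K. M j m * y m else 0)"

lemma linmap_Rn: "linmap K' K M y \<in> Rn K'"
  unfolding linmap_def Rn_def by auto

lemma linmap_orig: "linmap K' K M orig = orig"
  unfolding linmap_def orig_def by auto

lemma smooth_map_linmap:
  assumes W: "open_Rn n W" shows "smooth_map n W K' (Rn K') (linmap K' K M)"
proof (rule smooth_mapI)
  fix j assume "j < K'"
  hence "(\<lambda>u. linmap K' K M u j) = (\<lambda>u. \<Sum>m<K. M j m * u m)" unfolding linmap_def by auto
  thus "smooth_real n W (\<lambda>u. linmap K' K M u j)" using smooth_linf[OF W] by simp
qed (auto simp: linmap_Rn)

lemma dmap_linmap: "dmap n (linmap K' n M) v = linmap K' n M v"
proof (rule ext)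
  fix j
  show "dmap n (linmap K' n M) v j = linmap K' n M v j"
  proof (cases "j < K'")
    case True
    hence e: "(\<lambda>u. linmap K' n M u j) = (\<lambda>u. \<Sum>m<n. M j m * u m)" unfolding linmap_def by auto
    show ?thesis unfolding dmap_def e pd_linf using True unfolding linmap_def by simp
  next
    case False
    hence e: "(\<lambda>u. linmap K' n M u j) = (\<lambda>u. 0)" unfolding linmap_def by auto
    show ?thesis unfolding dmap_def e pd_const using False unfolding linmap_def by simp
  qed
qed

definition linp :: "nat \<Rightarrow> (nat \<Rightarrow> 'v::real_vector) \<Rightarrow> rn \<Rightarrow> 'v" where
  "linp K ws y = (\<Sum>k<K. y k *\<^sub>R ws k)"

definition linobj :: "nat \<Rightarrow> (nat \<Rightarrow> 'v::real_vector) \<Rightarrow> 'v pidx" where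
  "linobj K ws = (K, Rn K, linp K ws)"

lemma lrep_linp: "open_Rn K N \<Longrightarrow> lrep K N (linp K ws)"
  unfolding lrep_def linp_def
  by (rule exI[of _ "map ws [0..<K]"], rule exI[of _ "\<lambda>k y. y k"]) (auto intro: smooth_coord smooth_sub)

lemma D_linp: "fine_diffeology D \<Longrightarrow> D K (Rn K) (linp K ws)"
proof -
  assume fine: "fine_diffeology D"
  have l: "lrep K (Rn K) (linp K ws)" by (rule lrep_linp[OF open_Rn_Rn])
  have "FP K (Rn K) (linp K ws)" unfolding FP_def using l by (auto intro!: exI[of _ "Rn K"])
  thus ?thesis using FP_D[OF fine_dvs[OF fine]] by blast
qed

lemma linp_orig: "linp K ws orig = 0"
  unfolding linp_def orig_def by simp

lemma centred_lin: "fine_diffeology D \<Longrightarrow> centred D 0 (linobj K ws)"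
  unfolding centred_def linobj_def using D_linp connected_Rn_Rn linp_orig by auto

lemma dd_lin: "dd K (linp K ws) a = linp K ws a"
proof -
  have "dd K (linp K ws) a = (\<Sum>k<K. (\<Sum>i<K. pd i (\<lambda>y. y k) orig * a i) *\<^sub>R ws k)"
    by (rule dd_rep[OF open_Rn_Rn orig_Rn]) (auto simp: linp_def intro: smooth_coord)
  also have "\<dots> = (\<Sum>k<K. a k *\<^sub>R ws k)"
    by (rule sum.cong[OF refl]) (simp add: pd_coord sum_ind')
  finally show ?thesis unfolding linp_def .
qed

lemma tmorph_lin:
  assumes fine: "fine_diffeology D"
    and eq: "\<forall>y\<in>Rn K1. linp K2 ws2 (linmap K2 K1 M y) = linp K1 ws1 y"
  shows "tmorph D 0 (linobj K1 ws1) (linobj K2 ws2) (linmap K2 K1 M)"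
  unfolding tmorph_def
  using centred_lin[OF fine] smooth_map_linmap[OF open_Rn_Rn] linmap_orig eq
  unfolding linobj_def by auto

lemma rel_lin:
  assumes fine: "fine_diffeology D"
    and eq: "\<forall>y\<in>Rn K1. linp K2 ws2 (linmap K2 K1 M y) = linp K1 ws1 y"
    and a: "a \<in> Rn K1"
  shows "ds_sub (delta (linobj K1 ws1) a) (delta (linobj K2 ws2) (linmap K2 K1 M a)) \<in> REL D 0"
proof -
  have "ds_sub (delta (linobj K1 ws1) a) (delta (linobj K2 ws2) (dmap (fst (linobj K1 ws1)) (linmap K2 K1 M) a)) \<in> REL D 0"
    by (rule gen_REL[OF tmorph_lin[OF fine eq]]) (use a in \<open>simp add: linobj_def\<close>)
  thus ?thesis by (simp add: linobj_def dmap_linmap)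
qed


lemma delta_orig: "delta c orig = ds_zero"
  unfolding delta_def ds_zero_def by auto

lemma ds_sub_zero: "ds_sub s ds_zero = s"
  unfolding ds_sub_def ds_zero_def orig_def by (simp add: fun_eq_iff)

lemma linp_add: "linp K ws (\<lambda>i. u i + w i) = linp K ws u + linp K ws w"
  unfolding linp_def by (simp add: scaleR_add_left sum.distrib)

lemma kill_lin:
  assumes fine: "fine_diffeology D" and a: "a \<in> Rn K" and z: "linp K ws a = 0"
  shows "delta (linobj K ws) a \<in> REL D 0"
proof (cases "a = orig")
  case True thus ?thesis using REL_zero by (simp add: delta_orig)
next
  case False
  then obtain k0 where k0: "a k0 \<noteq> 0" unfolding orig_def by auto
  hence k0K: "k0 < K" using a unfolding Rn_def by (metis (mono_tags) mem_Collect_eq not_less)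
  define q where "q = (\<Sum>k<K. a k * a k)"
  have q: "q > 0"
  proof -
    have "a k0 * a k0 \<le> q" unfolding q_def using k0K by (intro member_le_sum) auto
    moreover have "a k0 * a k0 > 0" using k0 by (auto simp: zero_less_mult_iff linorder_neq_iff)
    ultimately show ?thesis by simp
  qed
  define M where "M j m = (if j = m then 1 else 0) - a j * a m / q" for j m
  have lm: "linmap K K M y j = (if j < K then y j - a j * (\<Sum>m<K. a m * y m) / q else 0)" for y j
  proof (cases "j < K")
    case True
    have "(\<Sum>m<K. M j m * y m) = (\<Sum>m<K. (if j = m then 1 else 0) * y m) - (\<Sum>m<K. a j * a m / q * y m)"
      unfolding M_def by (simp add: left_diff_distrib sum_subtractf)
    also have "\<dots> = y j - a j * (\<Sum>m<K. a m * y m) / q"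
      using True by (simp add: sum_ind sum_distrib_left sum_divide_distrib mult.assoc)
    finally show ?thesis unfolding linmap_def using True by simp
  qed (simp add: linmap_def)
  have eq: "\<forall>y\<in>Rn K. linp K ws (linmap K K M y) = linp K ws y"
  proof
    fix y assume "y \<in> Rn K"
    have "linp K ws (linmap K K M y) = (\<Sum>j<K. (y j - a j * (\<Sum>m<K. a m * y m) / q) *\<^sub>R ws j)"
      unfolding linp_def lm by simp
    also have "\<dots> = linp K ws y - ((\<Sum>m<K. a m * y m) / q) *\<^sub>R linp K ws a"
      unfolding linp_def by (simp add: scaleR_diff_left sum_subtractf scaleR_sum_right mult.commute)
    also have "\<dots> = linp K ws y" using z by simp
    finally show "linp K ws (linmap K K M y) = linp K ws y" .
  qed
  have ma: "linmap K K M a = orig"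
  proof (rule ext)
    fix j
    show "linmap K K M a j = orig j"
      unfolding lm orig_def q_def[symmetric] using q by simp
  qed
  have "ds_sub (delta (linobj K ws) a) (delta (linobj K ws) (linmap K K M a)) \<in> REL D 0"
    by (rule rel_lin[OF fine eq a])
  thus ?thesis unfolding ma delta_orig ds_sub_zero .
qed

definition wsj :: "nat \<Rightarrow> (nat \<Rightarrow> 'v) \<Rightarrow> (nat \<Rightarrow> 'v) \<Rightarrow> nat \<Rightarrow> 'v" where
  "wsj K1 ws1 ws2 k = (if k < K1 then ws1 k else ws2 (k - K1))"

definition inj1 :: "nat \<Rightarrow> nat \<Rightarrow> real" where
  "inj1 j m = (if j = m then 1 else 0)"

definition inj2 :: "nat \<Rightarrow> nat \<Rightarrow> nat \<Rightarrow> real" where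
  "inj2 K1 j m = (if j = K1 + m then 1 else 0)"

lemma lm1: "linmap (K1 + K2) K1 inj1 y j = (if j < K1 then y j else 0)"
proof -
  have "(\<Sum>m<K1. inj1 j m * y m) = (if j < K1 then y j else 0)"
    unfolding inj1_def by (rule sum_ind)
  thus ?thesis unfolding linmap_def by auto
qed

lemma lm2: "linmap (K1 + K2) K2 (inj2 K1) y j = (if K1 \<le> j \<and> j < K1 + K2 then y (j - K1) else 0)"
proof (cases "K1 \<le> j")
  case True
  then obtain d where d: "j = K1 + d" using le_Suc_ex by blast
  have "(\<Sum>m<K2. inj2 K1 j m * y m) = (\<Sum>m<K2. (if d = m then 1 else 0) * y m)"
    unfolding inj2_def d by simp
  also have "\<dots> = (if d < K2 then y d else 0)" by (rule sum_ind)
  finally show ?thesis unfolding linmap_def d by auto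
next
  case False
  have "(\<Sum>m<K2. inj2 K1 j m * y m) = 0" unfolding inj2_def using False by simp
  thus ?thesis unfolding linmap_def using False by auto
qed

lemma eq_inj1: "\<forall>y\<in>Rn K1. linp (K1 + K2) (wsj K1 ws1 ws2) (linmap (K1 + K2) K1 inj1 y) = linp K1 ws1 y"
proof
  fix y
  show "linp (K1 + K2) (wsj K1 ws1 ws2) (linmap (K1 + K2) K1 inj1 y) = linp K1 ws1 y"
    unfolding linp_def sum_lessThan_add lm1 wsj_def by simp
qed

lemma eq_inj2: "\<forall>y\<in>Rn K2. linp (K1 + K2) (wsj K1 ws1 ws2) (linmap (K1 + K2) K2 (inj2 K1) y) = linp K2 ws2 y"
proof
  fix y
  show "linp (K1 + K2) (wsj K1 ws1 ws2) (linmap (K1 + K2) K2 (inj2 K1) y) = linp K2 ws2 y"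
    unfolding linp_def sum_lessThan_add lm2 wsj_def by simp
qed


lemma merge_rel:
  assumes fine: "fine_diffeology D" and a: "a \<in> Rn K1" and b: "b \<in> Rn K2"
  shows "ds_sub (ds_add (delta (linobj K1 ws1) a) (delta (linobj K2 ws2) b))
           (delta (linobj (K1 + K2) (wsj K1 ws1 ws2))
              (\<lambda>i. linmap (K1 + K2) K1 inj1 a i + linmap (K1 + K2) K2 (inj2 K1) b i)) \<in> REL D 0"
proof -
  let ?L = "linobj (K1 + K2) (wsj K1 ws1 ws2)"
  have r1: "ds_sub (delta (linobj K1 ws1) a) (delta ?L (linmap (K1 + K2) K1 inj1 a)) \<in> REL D 0"
    by (rule rel_lin[OF fine eq_inj1 a])
  have r2: "ds_sub (delta (linobj K2 ws2) b) (delta ?L (linmap (K1 + K2) K2 (inj2 K1) b)) \<in> REL D 0"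
    by (rule rel_lin[OF fine eq_inj2 b])
  have "ds_add (ds_sub (delta (linobj K1 ws1) a) (delta ?L (linmap (K1 + K2) K1 inj1 a)))
               (ds_sub (delta (linobj K2 ws2) b) (delta ?L (linmap (K1 + K2) K2 (inj2 K1) b))) \<in> REL D 0"
    by (rule REL_add[OF r1 r2])
  moreover have "ds_add (ds_sub (delta (linobj K1 ws1) a) (delta ?L (linmap (K1 + K2) K1 inj1 a)))
               (ds_sub (delta (linobj K2 ws2) b) (delta ?L (linmap (K1 + K2) K2 (inj2 K1) b))) =
      ds_sub (ds_add (delta (linobj K1 ws1) a) (delta (linobj K2 ws2) b))
           (delta ?L (\<lambda>i. linmap (K1 + K2) K1 inj1 a i + linmap (K1 + K2) K2 (inj2 K1) b i))"
    unfolding ds_add_def ds_sub_def delta_def orig_def by (simp add: fun_eq_iff)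
  ultimately show ?thesis by simp
qed

lemma merge_val:
  assumes a: "a \<in> Rn K1" and b: "b \<in> Rn K2"
  shows "linp (K1 + K2) (wsj K1 ws1 ws2) (\<lambda>i. linmap (K1 + K2) K1 inj1 a i + linmap (K1 + K2) K2 (inj2 K1) b i)
     = linp K1 ws1 a + linp K2 ws2 b"
  unfolding linp_add using eq_inj1[of K1 K2 ws1 ws2] eq_inj2[of K2 K1 ws1 ws2] a b by simp

lemma merge_Rn: "(\<lambda>i. linmap K K1 M1 a i + linmap K K2 M2 b i) \<in> Rn K"
  using linmap_Rn[of K K1 M1 a] linmap_Rn[of K K2 M2 b] unfolding Rn_def by auto

lemma dmap_id: "v \<in> Rn n \<Longrightarrow> dmap n (\<lambda>y. y) v = v"
proof (rule ext)
  fix j assume v: "v \<in> Rn n"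
  have "dmap n (\<lambda>y. y) v j = (\<Sum>i<n. (if i = j then 1 else 0) * v i)"
    unfolding dmap_def pd_coord by simp
  also have "\<dots> = (if j < n then v j else 0)" by (rule sum_ind')
  also have "\<dots> = v j" using v unfolding Rn_def by auto
  finally show "dmap n (\<lambda>y. y) v j = v j" .
qed

lemma reduce:
  assumes fine: "fine_diffeology D" and c: "centred D 0 c" and v: "v \<in> Rn (fst c)"
  shows "\<exists>K ws a. a \<in> Rn K \<and> ds_sub (delta c v) (delta (linobj K ws) a) \<in> REL D 0 \<and> linp K ws a = ddc c v"
proof -
  obtain n U p where cc: "c = (n, U, p)" by (cases c) auto
  have Dp: "D n U p" "connected_Rn n U" "orig \<in> U" "p orig = 0" using c unfolding cc centred_def by auto
  have FPp: "FP n U p" using fine_FP[of D n U p, OF fine Dp(1)] .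
  have oU: "open_Rn n U" using FPp unfolding FP_def by (rule conjunct1)
  have UR: "U \<subseteq> Rn n" using oU unfolding open_Rn_def by (rule conjunct1)
  obtain N where N: "open_Rn n N" "orig \<in> N" "N \<subseteq> U" "lrep n N p"
    using FPp Dp(3) unfolding FP_def by blast
  then obtain wl r where w: "\<forall>k<length wl. smooth_real n N (r k)" "\<forall>y\<in>N. p y = (\<Sum>k<length wl. r k y *\<^sub>R wl ! k)"
    unfolding lrep_def by blast
  define K where "K = length wl"
  define ws where "ws k = wl ! k" for k
  have wK: "\<forall>k<K. smooth_real n N (r k)" "\<forall>y\<in>N. p y = (\<Sum>k<K. r k y *\<^sub>R ws k)"
    using w unfolding K_def ws_def by auto
  obtain e where e: "e > 0" "bxR n orig e \<subseteq> N" using bxR_sub[OF N(1,2)] by blast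
  define B where "B = bxR n orig e"
  have B: "open_Rn n B" "orig \<in> B" "B \<subseteq> N" "connected_Rn n B"
    unfolding B_def using open_bxR bxR_center[OF orig_Rn e(1)] e(2) connected_bxR by auto
  have dD: "diffeology UNIV D" using dvs_diff[OF fine_dvs[OF fine]] .
  have idm: "smooth_map n B n U (\<lambda>y. y)"
    by (rule smooth_mapI) (use B N UR in \<open>auto intro: smooth_coord\<close>)
  have "D n B (p \<circ> (\<lambda>y. y))" by (rule diff_comp[where D=D, OF dD Dp(1) B(1) idm])
  hence DB: "D n B p" by (simp add: comp_def)
  have cB: "centred D 0 (n, B, p)" unfolding centred_def using DB B Dp(4) by auto
  have tm1: "tmorph D 0 (n, B, p) c (\<lambda>y. y)"
    unfolding tmorph_def using cB c idm unfolding cc by auto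
  have vn: "v \<in> Rn n" using v unfolding cc by simp
  have r1: "ds_sub (delta (n, B, p) v) (delta c v) \<in> REL D 0"
    using gen_REL[OF tm1, of v] vn dmap_id[OF vn] by simp
  define \<rho> where "\<rho> u k = (if k < K then r k u - r k orig else 0)" for u k
  have sm\<rho>: "smooth_map n B K (Rn K) \<rho>"
  proof (rule smooth_mapI)
    show "\<And>u. u \<in> B \<Longrightarrow> \<rho> u \<in> Rn K" unfolding \<rho>_def Rn_def by auto
    fix k assume k: "k < K"
    hence e1: "(\<lambda>u. \<rho> u k) = (\<lambda>u. r k u - r k orig)" unfolding \<rho>_def by auto
    have "smooth_real n B (r k)" using wK(1) k smooth_sub[OF B(3)] by blast
    thus "smooth_real n B (\<lambda>u. \<rho> u k)" unfolding e1 by (intro smooth_minus smooth_const B(1))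
  qed simp
  have \<rho>0: "\<rho> orig = orig" unfolding \<rho>_def orig_def by auto
  have p0: "(\<Sum>k<K. r k orig *\<^sub>R ws k) = 0" using wK(2) N(2) Dp(4) by metis
  have \<rho>p: "\<forall>u\<in>B. linp K ws (\<rho> u) = p u"
  proof
    fix u assume u: "u \<in> B"
    have "linp K ws (\<rho> u) = (\<Sum>k<K. (r k u - r k orig) *\<^sub>R ws k)"
      unfolding linp_def \<rho>_def by simp
    also have "\<dots> = (\<Sum>k<K. r k u *\<^sub>R ws k) - (\<Sum>k<K. r k orig *\<^sub>R ws k)"
      by (simp add: scaleR_diff_left sum_subtractf)
    also have "\<dots> = p u" using p0 wK(2) u B(3) by auto
    finally show "linp K ws (\<rho> u) = p u" .
  qed
  have tm2: "tmorph D 0 (n, B, p) (linobj K ws) \<rho>"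
    unfolding tmorph_def using cB centred_lin[OF fine] sm\<rho> \<rho>0 \<rho>p unfolding linobj_def by auto
  define a where "a = dmap n \<rho> v"
  have r2: "ds_sub (delta (n, B, p) v) (delta (linobj K ws) a) \<in> REL D 0"
    using gen_REL[OF tm2, of v] vn unfolding a_def by simp
  have pd\<rho>: "pd i (\<lambda>u. \<rho> u k) orig = pd i (r k) orig" if "k < K" "i < n" for i k
  proof -
    have e1: "(\<lambda>u. \<rho> u k) = (\<lambda>u. r k u - r k orig)" unfolding \<rho>_def using that by auto
    have "hp i (r k) orig (pd i (r k) orig)" using smooth_hp wK(1) that N(2) by blast
    hence "hp i (\<lambda>u. r k u - r k orig) orig (pd i (r k) orig - 0)"
      by (intro DERIV_diff DERIV_const)
    thus ?thesis unfolding e1 using hp_pd by simp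
  qed
  have aR: "a \<in> Rn K" unfolding a_def dmap_def Rn_def \<rho>_def by simp
  have ak: "a k = (\<Sum>i<n. pd i (r k) orig * v i)" if "k < K" for k
    unfolding a_def dmap_def using pd\<rho>[OF that] by simp
  have val: "linp K ws a = ddc c v"
  proof -
    have "ddc c v = dd n p v" unfolding cc by simp
    also have "\<dots> = (\<Sum>k<K. (\<Sum>i<n. pd i (r k) orig * v i) *\<^sub>R ws k)"
      by (rule dd_rep[OF N(1,2) wK])
    also have "\<dots> = linp K ws a" unfolding linp_def using ak by simp
    finally show ?thesis by simp
  qed
  have "ds_sub (ds_sub (delta (n, B, p) v) (delta (linobj K ws) a)) (ds_sub (delta (n, B, p) v) (delta c v)) \<in> REL D 0"
    by (rule REL_sub[OF r2 r1])
  moreover have "ds_sub (ds_sub (delta (n, B, p) v) (delta (linobj K ws) a)) (ds_sub (delta (n, B, p) v) (delta c v))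
       = ds_sub (delta c v) (delta (linobj K ws) a)"
    unfolding ds_sub_def by (simp add: fun_eq_iff)
  ultimately show ?thesis using aR val by auto
qed


lemma linp_orig0: "linp 0 ws a = 0" unfolding linp_def by simp

lemma DS_reduce:
  assumes fine: "fine_diffeology D" and F: "finite F"
  shows "s \<in> DS D 0 \<Longrightarrow> supp s \<subseteq> F \<Longrightarrow>
    \<exists>K ws a. a \<in> Rn K \<and> ds_sub s (delta (linobj K ws) a) \<in> REL D 0 \<and> linp K ws a = Phi s"
  using F
proof (induction F arbitrary: s rule: finite_induct)
  case empty
  have sz: "s = ds_zero" using empty.prems unfolding supp_def ds_zero_def by auto
  have "ds_sub s (delta (linobj 0 (\<lambda>_. 0)) orig) \<in> REL D 0"
    unfolding sz delta_orig by (rule REL_refl)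
  moreover have "linp 0 (\<lambda>_. 0) orig = Phi s" unfolding sz Phi_zero linp_def by simp
  ultimately show ?case using orig_Rn by blast
next
  case (insert c F)
  define s' where "s' = (\<lambda>c'. if c' = c then orig else s c')"
  have sDS: "finite (supp s)" "\<forall>c\<in>supp s. centred D 0 c" "\<forall>c. s c \<in> Rn (fst c)"
    by (rule DS_finite[OF insert.prems(1)], rule DS_centred[OF insert.prems(1)])
       (use insert.prems(1) in \<open>unfold DS_def, blast\<close>)
  have supps': "supp s' \<subseteq> supp s" unfolding supp_def s'_def by auto
  have s'DS: "s' \<in> DS D 0"
  proof -
    have "finite {c. s' c \<noteq> orig}" using finite_subset[OF supps' sDS(1)] unfolding supp_def .
    moreover have "\<forall>c. s' c \<noteq> orig \<longrightarrow> centred D 0 c" using sDS(2) supps' unfolding supp_def by blast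
    moreover have "\<forall>c. s' c \<in> Rn (fst c)" using sDS(3) unfolding s'_def by auto
    ultimately show ?thesis unfolding DS_def by blast
  qed
  have "supp s' \<subseteq> F" using insert.prems(2) unfolding supp_def s'_def by auto
  from insert.IH[OF s'DS this] obtain K1 ws1 a1 where
    h1: "a1 \<in> Rn K1" "ds_sub s' (delta (linobj K1 ws1) a1) \<in> REL D 0" "linp K1 ws1 a1 = Phi s'" by blast
  have sdec: "s = ds_add s' (delta c (s c))"
    unfolding ds_add_def s'_def delta_def orig_def by (simp add: fun_eq_iff)
  show ?case
  proof (cases "s c = orig")
    case True
    hence "s = s'" unfolding s'_def by auto
    thus ?thesis using h1 by blast
  next
    case False
    hence cs: "c \<in> supp s" unfolding supp_def by simp
    hence cc: "centred D 0 c" using sDS(2) by blast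
    obtain K2 ws2 a2 where h2: "a2 \<in> Rn K2" "ds_sub (delta c (s c)) (delta (linobj K2 ws2) a2) \<in> REL D 0"
        "linp K2 ws2 a2 = ddc c (s c)"
      using reduce[OF fine cc sDS(3)[rule_format, of c]] by blast
    let ?L = "linobj (K1 + K2) (wsj K1 ws1 ws2)"
    let ?a = "\<lambda>i. linmap (K1 + K2) K1 inj1 a1 i + linmap (K1 + K2) K2 (inj2 K1) a2 i"
    have m: "ds_sub (ds_add (delta (linobj K1 ws1) a1) (delta (linobj K2 ws2) a2)) (delta ?L ?a) \<in> REL D 0"
      by (rule merge_rel[OF fine h1(1) h2(1)])
    have "ds_add (ds_add (ds_sub s' (delta (linobj K1 ws1) a1)) (ds_sub (delta c (s c)) (delta (linobj K2 ws2) a2)))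
       (ds_sub (ds_add (delta (linobj K1 ws1) a1) (delta (linobj K2 ws2) a2)) (delta ?L ?a)) \<in> REL D 0"
      by (intro REL_add h1(2) h2(2) m)
    moreover have "ds_add (ds_add (ds_sub s' (delta (linobj K1 ws1) a1)) (ds_sub (delta c (s c)) (delta (linobj K2 ws2) a2)))
       (ds_sub (ds_add (delta (linobj K1 ws1) a1) (delta (linobj K2 ws2) a2)) (delta ?L ?a)) =
       ds_sub (ds_add s' (delta c (s c))) (delta ?L ?a)"
      unfolding ds_add_def ds_sub_def by (simp add: fun_eq_iff)
    ultimately have rel: "ds_sub s (delta ?L ?a) \<in> REL D 0" using sdec by simp
    have gs': "goods s'" using goods_centred[OF fine] DS_centred[OF s'DS] by blast
    have gd: "goods (delta c (s c))" by (rule goods_delta[OF centred_good[OF fine cc]])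
    have "Phi s = Phi s' + Phi (delta c (s c))"
      using Phi_add[OF DS_finite[OF s'DS] finite_supp_delta gs' gd] sdec by simp
    also have "\<dots> = linp (K1 + K2) (wsj K1 ws1 ws2) ?a"
      unfolding merge_val[OF h1(1) h2(1)] h1(3) h2(3) Phi_delta ..
    finally show ?thesis using rel merge_Rn by metis
  qed
qed

lemma inj_core:
  assumes fine: "fine_diffeology D" and s: "s \<in> DS D 0" and z: "Phi s = 0"
  shows "s \<in> REL D 0"
proof -
  obtain K ws a where h: "a \<in> Rn K" "ds_sub s (delta (linobj K ws) a) \<in> REL D 0" "linp K ws a = Phi s"
    using DS_reduce[OF fine DS_finite[OF s] s subset_refl] by blast
  have "delta (linobj K ws) a \<in> REL D 0" using kill_lin[OF fine h(1)] h(3) z by simp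
  hence "ds_add (ds_sub s (delta (linobj K ws) a)) (delta (linobj K ws) a) \<in> REL D 0"
    by (rule REL_add[OF h(2)])
  moreover have "ds_add (ds_sub s (delta (linobj K ws) a)) (delta (linobj K ws) a) = s"
    unfolding ds_add_def ds_sub_def by (simp add: fun_eq_iff)
  ultimately show ?thesis by simp
qed

lemma Tsp_elem: "A \<in> Tsp D x \<Longrightarrow> \<exists>s\<in>DS D x. A = tcls D x s"
  unfolding Tsp_def by blast

theorem phi_bij:
  assumes fine: "fine_diffeology (D :: nat \<Rightarrow> rn set \<Rightarrow> (rn \<Rightarrow> 'v::real_vector) \<Rightarrow> bool)"
  shows "bij_betw (phi D 0) (Tsp D 0) (UNIV :: 'v set)"
  unfolding bij_betw_def
proof
  show "inj_on (phi D 0) (Tsp D 0)"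
  proof (rule inj_onI)
    fix A B assume A: "A \<in> Tsp D 0" and B: "B \<in> Tsp D 0" and e: "phi D 0 A = phi D 0 B"
    obtain s where s: "s \<in> DS D 0" "A = tcls D 0 s" using Tsp_elem[OF A] by blast
    obtain t where t: "t \<in> DS D 0" "B = tcls D 0 t" using Tsp_elem[OF B] by blast
    have "Phi s = Phi t" using e unfolding s(2) t(2) phi_tcls[OF fine s(1)] phi_tcls[OF fine t(1)] .
    hence "Phi (ds_sub s t) = 0"
      using Phi_sub[OF DS_finite[OF s(1)] DS_finite[OF t(1)] goods_centred[OF fine DS_centred[OF s(1)]]
          goods_centred[OF fine DS_centred[OF t(1)]]] by simp
    hence r: "ds_sub s t \<in> REL D 0" using inj_core[OF fine DS_sub[OF s(1) t(1)]] by blast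
    show "A = B" using tcls_eq[OF r] s(2) t(2) by simp
  qed
next
  show "phi D 0 ` Tsp D 0 = UNIV"
  proof (intro set_eqI iffI)
    fix w :: 'v assume "w \<in> UNIV"
    define e0 where "e0 = (\<lambda>i::nat. if i = 0 then (1::real) else 0)"
    have e0: "e0 \<in> Rn 1" unfolding e0_def Rn_def by auto
    let ?s = "delta (linobj 1 (\<lambda>_. w)) e0"
    have sDS: "?s \<in> DS D 0" by (rule DS_delta[OF centred_lin[OF fine]]) (use e0 in \<open>simp add: linobj_def\<close>)
    have "Phi ?s = w" unfolding Phi_delta by (simp add: linobj_def dd_lin linp_def e0_def)
    hence pw: "phi D 0 (tcls D 0 ?s) = w" using phi_tcls[OF fine sDS] by simp
    have mem: "tcls D 0 ?s \<in> Tsp D 0" unfolding Tsp_def using sDS by (rule imageI)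
    show "w \<in> phi D 0 ` Tsp D 0" by (rule image_eqI[where f="phi D 0", OF pw[symmetric] mem])
  qed simp
qed

theorem phi_add:
  assumes fine: "fine_diffeology D" and A: "A \<in> Tsp D 0" and B: "B \<in> Tsp D 0"
  shows "phi D 0 (T_add D 0 A B) = phi D 0 A + phi D 0 B"
proof -
  obtain s where s: "s \<in> DS D 0" "A = tcls D 0 s" using Tsp_elem[OF A] by blast
  obtain t where t: "t \<in> DS D 0" "B = tcls D 0 t" using Tsp_elem[OF B] by blast
  have "phi D 0 (T_add D 0 A B) = Phi (ds_add s t)"
    unfolding s(2) t(2) T_add_tcls[OF s(1) t(1)] using phi_tcls[OF fine DS_add[OF s(1) t(1)]] .
  also have "\<dots> = Phi s + Phi t"
    by (rule Phi_add[OF DS_finite[OF s(1)] DS_finite[OF t(1)] goods_centred[OF fine DS_centred[OF s(1)]]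
          goods_centred[OF fine DS_centred[OF t(1)]]])
  finally show ?thesis using phi_tcls[OF fine s(1)] phi_tcls[OF fine t(1)] s t by simp
qed

theorem phi_scale:
  assumes fine: "fine_diffeology D" and A: "A \<in> Tsp D 0"
  shows "phi D 0 (T_scale D 0 r A) = r *\<^sub>R phi D 0 A"
proof -
  obtain s where s: "s \<in> DS D 0" "A = tcls D 0 s" using Tsp_elem[OF A] by blast
  have "phi D 0 (T_scale D 0 r A) = Phi (ds_scale r s)"
    unfolding s(2) T_scale_tcls[OF s(1)] using phi_tcls[OF fine DS_scale[OF s(1)]] .
  also have "\<dots> = r *\<^sub>R Phi s"
    by (rule Phi_scale[OF DS_finite[OF s(1)] goods_centred[OF fine DS_centred[OF s(1)]]])
  finally show ?thesis using phi_tcls[OF fine s(1)] s by simp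
qed


lemma tr_orig: "(\<lambda>y i. y i - orig i) ` S = S"
proof -
  have e: "(\<lambda>y i. y i - orig i) = (\<lambda>y. y)" unfolding orig_def by (simp add: fun_eq_iff)
  show ?thesis unfolding e by simp
qed

lemma add_orig: "(\<lambda>y. p (\<lambda>i. y i + orig i)) = p"
  unfolding orig_def by (simp add: fun_eq_iff)

lemma fstp_sndp_simps: "fstp K w = (\<lambda>i. if i < K then w i else 0)" "sndp K w = (\<lambda>i. w (i + K))"
  unfolding fstp_def sndp_def by auto

theorem cond5:
  fixes D :: "nat \<Rightarrow> rn set \<Rightarrow> (rn \<Rightarrow> 'v::real_vector) \<Rightarrow> bool"
  assumes fine: "fine_diffeology D" and Dp: "D n W p"
  shows "T_diff UNIV D 0 n W (inv_into (Tsp D 0) (phi D 0) \<circ> p)"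
  unfolding T_diff_def hector_def
proof (intro allI impI)
  fix D' :: "nat \<Rightarrow> rn set \<Rightarrow> (rn \<Rightarrow> 'v \<times> ('v pidx \<Rightarrow> rn) set) \<Rightarrow> bool"
  assume a: "diffeology (TX UNIV D) D' \<and>
    (\<forall>n U f. D n U f \<and> connected_Rn n U \<longrightarrow> D' (2 * n) (tanU n U) (Tmap D n U f))"
  have dD': "diffeology (TX UNIV D) D'" using a by blast
  have Tm: "\<And>n U f. D n U f \<Longrightarrow> connected_Rn n U \<Longrightarrow> D' (2 * n) (tanU n U) (Tmap D n U f)"
    using a by blast
  let ?\<psi> = "inv_into (Tsp D 0) (phi D 0)"
  have bij: "bij_betw (phi D 0) (Tsp D 0) UNIV" by (rule phi_bij[OF fine])
  have \<psi>T: "?\<psi> v \<in> Tsp D 0" for v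
    using bij by (metis bij_betw_def inv_into_into UNIV_I)
  have FPp: "FP n W p" using fine_FP[of D n W p, OF fine Dp] .
  have oW: "open_Rn n W" using FPp unfolding FP_def by (rule conjunct1)
  have vals: "\<forall>u\<in>W. (0, ?\<psi> (p u)) \<in> TX UNIV D" using \<psi>T unfolding TX_def by auto
  have "D' n W (\<lambda>w. (0, ?\<psi> (p w)))"
  proof (rule diff_sheaf[OF dD' oW vals], intro ballI)
    fix u assume u: "u \<in> W"
    obtain N where N: "open_Rn n N" "u \<in> N" "N \<subseteq> W" "lrep n N p" using FPp u unfolding FP_def by blast
    then obtain wl r where w: "\<forall>k<length wl. smooth_real n N (r k)" "\<forall>y\<in>N. p y = (\<Sum>k<length wl. r k y *\<^sub>R wl ! k)"
      unfolding lrep_def by blast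
    define K where "K = length wl"
    define ws where "ws k = wl ! k" for k
    have wK: "\<forall>k<K. smooth_real n N (r k)" "\<forall>y\<in>N. p y = (\<Sum>k<K. r k y *\<^sub>R ws k)"
      using w unfolding K_def ws_def by auto
    let ?lp = "linp K ws"
    have T: "D' (2 * K) (tanU K (Rn K)) (Tmap D K (Rn K) ?lp)"
      by (rule Tm[OF D_linp[OF fine] connected_Rn_Rn])
    define g where "g u' = (\<lambda>i. if K \<le> i \<and> i < 2 * K then r (i - K) u' else 0)" for u'
    have fg: "fstp K (g u') = orig" for u' unfolding fstp_def g_def orig_def by auto
    have sg: "sndp K (g u') = (\<lambda>i. if i < K then r i u' else 0)" for u'
      unfolding sndp_def g_def by (auto simp: fun_eq_iff)
    have gR: "g u' \<in> Rn (2 * K)" for u' unfolding g_def Rn_def by auto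
    have sm: "smooth_map n N (2 * K) (tanU K (Rn K)) g"
    proof (rule smooth_mapI)
      show "\<And>u. u \<in> N \<Longrightarrow> g u \<in> tanU K (Rn K)" unfolding tanU_def using gR fg by simp
      show "tanU K (Rn K) \<subseteq> Rn (2 * K)" unfolding tanU_def by auto
      fix j assume j: "j < 2 * K"
      show "smooth_real n N (\<lambda>u. g u j)"
      proof (cases "K \<le> j")
        case True
        hence "(\<lambda>u. g u j) = r (j - K)" unfolding g_def using j by (auto simp: fun_eq_iff)
        thus ?thesis using wK(1) True j by auto
      next
        case False
        hence "(\<lambda>u. g u j) = (\<lambda>_. 0)" unfolding g_def by (auto simp: fun_eq_iff)
        thus ?thesis by simp
      qed
    qed
    have c1: "D' n N (Tmap D K (Rn K) ?lp \<circ> g)"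
      by (rule diff_comp[where D=D', OF dD' T N(1) sm])
    have eqv: "\<forall>u'\<in>N. (0, ?\<psi> (p u')) = (Tmap D K (Rn K) ?lp \<circ> g) u'"
    proof
      fix u' assume u': "u' \<in> N"
      define av where "av = (\<lambda>i. if i < K then r i u' else 0)"
      have avR: "av \<in> Rn K" unfolding av_def Rn_def by auto
      have tm: "Tmap D K (Rn K) ?lp (g u') = (0, tinj D 0 (linobj K ws) av)"
        unfolding Tmap_def Let_def fg sg tr_orig add_orig linp_orig av_def linobj_def by simp
      have sDS: "delta (linobj K ws) av \<in> DS D 0"
        by (rule DS_delta[OF centred_lin[OF fine]]) (use avR in \<open>simp add: linobj_def\<close>)
      have "phi D 0 (tinj D 0 (linobj K ws) av) = Phi (delta (linobj K ws) av)"
        unfolding tinj_def by (rule phi_tcls[OF fine sDS])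
      also have "\<dots> = linp K ws av" unfolding Phi_delta by (simp add: linobj_def dd_lin)
      also have "\<dots> = p u'" unfolding linp_def av_def using wK(2) u' by simp
      finally have pe: "phi D 0 (tinj D 0 (linobj K ws) av) = p u'" .
      have mem: "tinj D 0 (linobj K ws) av \<in> Tsp D 0" unfolding tinj_def Tsp_def using sDS by (rule imageI)
      have "?\<psi> (p u') = tinj D 0 (linobj K ws) av"
        unfolding pe[symmetric] by (rule inv_into_f_f[OF bij_betw_imp_inj_on[OF bij] mem])
      thus "(0, ?\<psi> (p u')) = (Tmap D K (Rn K) ?lp \<circ> g) u'" using tm by simp
    qed
    have "D' n N (\<lambda>w. (0, ?\<psi> (p w)))" by (rule diff_agree[where D=D', OF dD' c1 eqv])
    thus "\<exists>W'. open_Rn n W' \<and> u \<in> W' \<and> W' \<subseteq> W \<and> D' n W' (\<lambda>w. (0, ?\<psi> (p w)))"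
      using N by blast
  qed
  thus "D' n W (\<lambda>w. (0, (inv_into (Tsp D 0) (phi D 0) \<circ> p) w))" by (simp add: comp_def)
qed


definition DD :: "(nat \<Rightarrow> rn set \<Rightarrow> (rn \<Rightarrow> 'v::real_vector) \<Rightarrow> bool) \<Rightarrow>
    nat \<Rightarrow> rn set \<Rightarrow> (rn \<Rightarrow> 'v \<times> ('v pidx \<Rightarrow> rn) set) \<Rightarrow> bool" where
  "DD D m W Q \<longleftrightarrow> open_Rn m W \<and> (\<forall>w\<in>W. Q w \<in> TX UNIV D) \<and> D m W (\<lambda>w. fst (Q w)) \<and>
      D m W (\<lambda>w. phi D (fst (Q w)) (snd (Q w)))"

lemma DD_diffeology:
  fixes D :: "nat \<Rightarrow> rn set \<Rightarrow> (rn \<Rightarrow> 'v::real_vector) \<Rightarrow> bool"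
  assumes fine: "fine_diffeology D"
  shows "diffeology (TX UNIV D) (DD D)"
  unfolding diffeology_def
proof (intro conjI allI impI)
  have dD: "diffeology UNIV D" using dvs_diff[OF fine_dvs[OF fine]] .
  {
    fix n U p assume "DD D n U p" thus "open_Rn n U" unfolding DD_def by blast
  next
    fix n U p assume "DD D n U p" thus "\<forall>u\<in>U. p u \<in> TX UNIV D" unfolding DD_def by blast
  next
    fix n U p q assume a: "DD D n U p \<and> (\<forall>u\<in>U. q u = p u)"
    have e: "\<forall>u\<in>U. fst (q u) = fst (p u)" "\<forall>u\<in>U. phi D (fst (q u)) (snd (q u)) = phi D (fst (p u)) (snd (p u))"
      using a by auto
    show "DD D n U q" unfolding DD_def
      using a diff_agree[where D=D, OF dD _ e(1)] diff_agree[where D=D, OF dD _ e(2)] unfolding DD_def by auto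
  next
    fix n U x assume a: "open_Rn n U \<and> x \<in> TX UNIV D"
    show "DD D n U (\<lambda>_. x)" unfolding DD_def
      using a diff_const[OF dD, of n U "fst x"] diff_const[OF dD, of n U "phi D (fst x) (snd x)"] by auto
  next
    fix n U p m W f assume a: "DD D n U p \<and> open_Rn m W \<and> smooth_map m W n U f"
    have fW: "\<forall>u\<in>W. f u \<in> U" using a unfolding smooth_map_def by blast
    have p1: "D n U (\<lambda>w. fst (p w))" and p2: "D n U (\<lambda>w. phi D (fst (p w)) (snd (p w)))"
      using a unfolding DD_def by auto
    have "D m W ((\<lambda>w. fst (p w)) \<circ> f)" using diff_comp[where D=D, OF dD p1] a by blast
    moreover have "D m W ((\<lambda>w. phi D (fst (p w)) (snd (p w))) \<circ> f)" using diff_comp[where D=D, OF dD p2] a by blast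
    moreover have "\<forall>w\<in>W. (p \<circ> f) w \<in> TX UNIV D" using a fW unfolding DD_def by auto
    ultimately show "DD D m W (p \<circ> f)" unfolding DD_def using a by (simp add: comp_def)
  next
    fix n U p
    assume a: "open_Rn n U \<and> (\<forall>u\<in>U. p u \<in> TX UNIV D) \<and>
       (\<forall>u\<in>U. \<exists>W. open_Rn n W \<and> u \<in> W \<and> W \<subseteq> U \<and> DD D n W p)"
    have "D n U (\<lambda>w. fst (p w))"
      by (rule diff_sheaf[OF dD]) (use a in \<open>auto simp: DD_def\<close>)
    moreover have "D n U (\<lambda>w. phi D (fst (p w)) (snd (p w)))"
      by (rule diff_sheaf[OF dD]) (use a in \<open>auto simp: DD_def\<close>)
    ultimately show "DD D n U p" unfolding DD_def using a by blast
  }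
qed


lemma addv_orig_upd: "addv u (orig(i := orig i + t)) = u(i := u i + t)"
  unfolding addv_def orig_def by (simp add: fun_eq_iff)

lemma pd_shift: "pd i (\<lambda>y. r (addv u y)) orig = pd i r u"
  unfolding pd_def addv_orig_upd ..

lemma dd_shift:
  fixes ws :: "nat \<Rightarrow> 'v::real_vector"
  assumes N: "open_Rn n N" and u: "u \<in> N" and r: "\<forall>k<K. smooth_real n N (r k)"
    and f: "\<forall>y\<in>N. f y = (\<Sum>k<K. r k y *\<^sub>R ws k)"
  shows "dd n (\<lambda>y. f (\<lambda>i. y i + u i)) v = (\<Sum>k<K. (\<Sum>i<n. pd i (r k) u * v i) *\<^sub>R ws k)"
proof -
  have NR: "N \<subseteq> Rn n" using N unfolding open_Rn_def by blast
  have uR: "u \<in> Rn n" using u NR by blast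
  define N0 where "N0 = {y \<in> Rn n. addv u y \<in> N}"
  have N0: "open_Rn n N0" unfolding N0_def by (rule open_tr[OF N uR])
  have o0: "orig \<in> N0" unfolding N0_def using u by (simp add: addv_def orig_def Rn_def)
  have sma: "smooth_map n N0 n N (addv u)"
    by (rule smooth_map_addv[OF N0]) (use NR in \<open>auto simp: N0_def\<close>)
  have r': "\<forall>k<K. smooth_real n N0 (\<lambda>y. r k (addv u y))"
    using smooth_comp[OF N0 N sma] r by blast
  have f': "\<forall>y\<in>N0. (\<lambda>y. f (\<lambda>i. y i + u i)) y = (\<Sum>k<K. r k (addv u y) *\<^sub>R ws k)"
    using f unfolding N0_def addv_def by auto
  have "dd n (\<lambda>y. f (\<lambda>i. y i + u i)) v = (\<Sum>k<K. (\<Sum>i<n. pd i (\<lambda>y. r k (addv u y)) orig * v i) *\<^sub>R ws k)"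
    by (rule dd_rep[OF N0 o0 r' f'])
  thus ?thesis unfolding pd_shift .
qed

definition cobj :: "nat \<Rightarrow> rn set \<Rightarrow> (rn \<Rightarrow> 'v) \<Rightarrow> rn \<Rightarrow> 'v pidx" where
  "cobj n U f u = (n, (\<lambda>y i. y i - u i) ` U, (\<lambda>y. f (\<lambda>i. y i + u i)))"

lemma centred_cobj:
  fixes D :: "nat \<Rightarrow> rn set \<Rightarrow> (rn \<Rightarrow> 'v::real_vector) \<Rightarrow> bool"
  assumes fine: "fine_diffeology D" and Df: "D n U f" and C: "connected_Rn n U" and u: "u \<in> U"
  shows "centred D (f u) (cobj n U f u)"
proof -
  have dD: "diffeology UNIV D" using dvs_diff[OF fine_dvs[OF fine]] .
  have oU: "open_Rn n U" using fine_FP[of D n U f, OF fine Df] unfolding FP_def by (rule conjunct1)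
  have UR: "U \<subseteq> Rn n" using oU unfolding open_Rn_def by (rule conjunct1)
  have uR: "u \<in> Rn n" using u UR by blast
  define T where "T = {y \<in> Rn n. addv u y \<in> U}"
  have trE: "(\<lambda>y i. y i - u i) ` U = T" unfolding T_def by (rule tr_eq[OF uR UR])
  have oT: "open_Rn n T" unfolding T_def by (rule open_tr[OF oU uR])
  have sma: "smooth_map n T n U (addv u)"
    by (rule smooth_map_addv[OF oT]) (use UR in \<open>auto simp: T_def\<close>)
  have "D n T (f \<circ> addv u)" by (rule diff_comp[where D=D, OF dD Df oT sma])
  moreover have "f \<circ> addv u = (\<lambda>y. f (\<lambda>i. y i + u i))" unfolding addv_def comp_def ..
  ultimately have DT: "D n T (\<lambda>y. f (\<lambda>i. y i + u i))" by simp
  have CT: "connected_Rn n T" unfolding T_def by (rule connected_tr[OF oU C uR])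
  have oT': "orig \<in> T" unfolding T_def using u by (simp add: addv_def orig_def Rn_def)
  have "(\<lambda>i. orig i + u i) = u" unfolding orig_def by simp
  thus ?thesis unfolding centred_def cobj_def trE using DT CT oT' by simp
qed

lemma Tmap_eq: "Tmap D n U f w = (f (fstp n w), tinj D (f (fstp n w)) (cobj n U f (fstp n w)) (sndp n w))"
  unfolding Tmap_def Let_def cobj_def ..

lemma sndp_Rn: "w \<in> Rn (2 * n) \<Longrightarrow> sndp n w \<in> Rn n"
  unfolding sndp_def Rn_def by auto

lemma DD_Tmap:
  fixes D :: "nat \<Rightarrow> rn set \<Rightarrow> (rn \<Rightarrow> 'v::real_vector) \<Rightarrow> bool"
  assumes fine: "fine_diffeology D" and Df: "D n U f" and C: "connected_Rn n U"
  shows "DD D (2 * n) (tanU n U) (Tmap D n U f)"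
proof -
  have dD: "diffeology UNIV D" using dvs_diff[OF fine_dvs[OF fine]] .
  have FPf: "FP n U f" using fine_FP[of D n U f, OF fine Df] .
  have oU: "open_Rn n U" using FPf unfolding FP_def by (rule conjunct1)
  have UR: "U \<subseteq> Rn n" using oU unfolding open_Rn_def by (rule conjunct1)
  have oT: "open_Rn (2 * n) (tanU n U)" by (rule open_tanU[OF oU])
  have tU: "w \<in> tanU n U \<Longrightarrow> fstp n w \<in> U \<and> w \<in> Rn (2 * n)" for w unfolding tanU_def by auto
  have cen: "w \<in> tanU n U \<Longrightarrow> centred D (f (fstp n w)) (cobj n U f (fstp n w))" for w
    using centred_cobj[where D=D, OF fine Df C] tU by blast
  have dsw: "w \<in> tanU n U \<Longrightarrow> delta (cobj n U f (fstp n w)) (sndp n w) \<in> DS D (f (fstp n w))" for w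
    using DS_delta[OF cen] sndp_Rn tU unfolding cobj_def by auto
  have vals: "\<forall>w\<in>tanU n U. Tmap D n U f w \<in> TX UNIV D"
    unfolding TX_def Tmap_eq tinj_def Tsp_def using dsw by auto
  have sf: "smooth_map (2 * n) (tanU n U) n U (fstp n)"
    by (rule smooth_map_fstp[OF oT]) (use tU UR in auto)
  have "D (2 * n) (tanU n U) (f \<circ> fstp n)" by (rule diff_comp[where D=D, OF dD Df oT sf])
  hence c1: "D (2 * n) (tanU n U) (\<lambda>w. fst (Tmap D n U f w))" unfolding Tmap_eq comp_def by simp
  have phiv: "phi D (fst (Tmap D n U f w)) (snd (Tmap D n U f w)) =
      dd n (\<lambda>y. f (\<lambda>i. y i + fstp n w i)) (sndp n w)" if w: "w \<in> tanU n U" for w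
  proof -
    have "phi D (fst (Tmap D n U f w)) (snd (Tmap D n U f w)) = Phi (delta (cobj n U f (fstp n w)) (sndp n w))"
      unfolding Tmap_eq tinj_def using phi_tcls[OF fine dsw[OF w]] by simp
    thus ?thesis unfolding Phi_delta cobj_def by simp
  qed
  have "D (2 * n) (tanU n U) (\<lambda>w. dd n (\<lambda>y. f (\<lambda>i. y i + fstp n w i)) (sndp n w))"
  proof (rule diff_sheaf[OF dD oT], simp, intro ballI)
    fix w0 assume w0: "w0 \<in> tanU n U"
    obtain N where N: "open_Rn n N" "fstp n w0 \<in> N" "N \<subseteq> U" "lrep n N f" using FPf tU[OF w0] unfolding FP_def by blast
    then obtain wl r where w: "\<forall>k<length wl. smooth_real n N (r k)" "\<forall>y\<in>N. f y = (\<Sum>k<length wl. r k y *\<^sub>R wl ! k)"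
      unfolding lrep_def by blast
    define K where "K = length wl"
    define ws where "ws k = wl ! k" for k
    have wK: "\<forall>k<K. smooth_real n N (r k)" "\<forall>y\<in>N. f y = (\<Sum>k<K. r k y *\<^sub>R ws k)"
      using w unfolding K_def ws_def by auto
    define W' where "W' = tanU n N"
    have oW': "open_Rn (2 * n) W'" unfolding W'_def by (rule open_tanU[OF N(1)])
    have w0W': "w0 \<in> W'" unfolding W'_def using w0 N(2) unfolding tanU_def by auto
    have W'sub: "W' \<subseteq> tanU n U" unfolding W'_def tanU_def using N(3) by auto
    have NR: "N \<subseteq> Rn n" using N(1) unfolding open_Rn_def by (rule conjunct1)
    have sfN: "smooth_map (2 * n) W' n N (fstp n)"
      by (rule smooth_map_fstp[OF oW']) (use NR in \<open>auto simp: W'_def tanU_def\<close>)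
    define \<rho> where "\<rho> k w = (\<Sum>i<n. pd i (r k) (fstp n w) * w (i + n))" for k w
    have s\<rho>: "\<forall>k<K. smooth_real (2 * n) W' (\<rho> k)"
    proof (intro allI impI)
      fix k assume k: "k < K"
      show "smooth_real (2 * n) W' (\<rho> k)" unfolding \<rho>_def
      proof (rule smooth_sum[OF _ _ oW'])
        fix i assume i: "i \<in> {..<n}"
        have "smooth_real (2 * n) W' (\<lambda>w. pd i (r k) (fstp n w))"
          by (rule smooth_comp[OF oW' N(1) sfN smooth_pd]) (use wK(1) k i in auto)
        thus "smooth_real (2 * n) W' (\<lambda>w. pd i (r k) (fstp n w) * w (i + n))"
          by (intro smooth_mult smooth_coord oW')
      qed simp
    qed
    have l1: "D (2 * n) W' (\<lambda>w. \<Sum>k<K. \<rho> k w *\<^sub>R ws k)"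
      by (rule dvs_lincomb[OF fine_dvs[OF fine] oW' s\<rho>])
    have l2: "\<forall>w\<in>W'. dd n (\<lambda>y. f (\<lambda>i. y i + fstp n w i)) (sndp n w) = (\<Sum>k<K. \<rho> k w *\<^sub>R ws k)"
    proof
      fix w assume w: "w \<in> W'"
      have "fstp n w \<in> N" using w unfolding W'_def tanU_def by auto
      from dd_shift[OF N(1) this wK] show "dd n (\<lambda>y. f (\<lambda>i. y i + fstp n w i)) (sndp n w) = (\<Sum>k<K. \<rho> k w *\<^sub>R ws k)"
        unfolding \<rho>_def sndp_def by simp
    qed
    have "D (2 * n) W' (\<lambda>w. dd n (\<lambda>y. f (\<lambda>i. y i + fstp n w i)) (sndp n w))"
      by (rule diff_agree[where D=D, OF dD l1 l2])
    thus "\<exists>W. open_Rn (2 * n) W \<and> w0 \<in> W \<and> W \<subseteq> tanU n U \<and>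
       D (2 * n) W (\<lambda>w. dd n (\<lambda>y. f (\<lambda>i. y i + fstp n w i)) (sndp n w))"
      using oW' w0W' W'sub by blast
  qed
  moreover have "\<forall>w\<in>tanU n U. phi D (fst (Tmap D n U f w)) (snd (Tmap D n U f w)) =
      dd n (\<lambda>y. f (\<lambda>i. y i + fstp n w i)) (sndp n w)" using phiv by blast
  ultimately have c2: "D (2 * n) (tanU n U) (\<lambda>w. phi D (fst (Tmap D n U f w)) (snd (Tmap D n U f w)))"
    by (rule diff_agree[where D=D, OF dD])
  show ?thesis unfolding DD_def using oT vals c1 c2 by blast
qed

theorem cond4:
  fixes D :: "nat \<Rightarrow> rn set \<Rightarrow> (rn \<Rightarrow> 'v::real_vector) \<Rightarrow> bool"
  assumes fine: "fine_diffeology D" and T: "T_diff UNIV D 0 n W q"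
  shows "D n W (phi D 0 \<circ> q)"
proof -
  have "DD D n W (\<lambda>w. (0, q w))"
    using T[unfolded T_diff_def hector_def, rule_format, of "DD D"] DD_diffeology[OF fine] DD_Tmap[OF fine]
    by blast
  thus ?thesis unfolding DD_def comp_def by simp
qed


theorem proposition4p22:
  fixes D :: "nat \<Rightarrow> rn set \<Rightarrow> (rn \<Rightarrow> 'v::real_vector) \<Rightarrow> bool"
  assumes "fine_diffeology D"
  shows "\<exists>\<phi>. bij_betw \<phi> (Tsp D 0) (UNIV :: 'v set) \<and>
           (\<forall>A\<in>Tsp D 0. \<forall>B\<in>Tsp D 0. \<phi> (T_add D 0 A B) = \<phi> A + \<phi> B) \<and>
           (\<forall>r. \<forall>A\<in>Tsp D 0. \<phi> (T_scale D 0 r A) = r *\<^sub>R \<phi> A) \<and>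
           (\<forall>n W q. T_diff UNIV D 0 n W q \<longrightarrow> D n W (\<phi> \<circ> q)) \<and>
           (\<forall>n W p. D n W p \<longrightarrow> T_diff UNIV D 0 n W (inv_into (Tsp D 0) \<phi> \<circ> p))"
proof (intro exI[of _ "phi D 0"] conjI allI ballI impI)
  show "bij_betw (phi D 0) (Tsp D 0) UNIV" by (rule phi_bij[OF assms])
next
  fix A B assume "A \<in> Tsp D 0" "B \<in> Tsp D 0"
  thus "phi D 0 (T_add D 0 A B) = phi D 0 A + phi D 0 B" by (rule phi_add[OF assms])
next
  fix r A assume "A \<in> Tsp D 0"
  thus "phi D 0 (T_scale D 0 r A) = r *\<^sub>R phi D 0 A" by (rule phi_scale[OF assms])
next
  fix n W q assume "T_diff UNIV D 0 n W q"
  thus "D n W (phi D 0 \<circ> q)" by (rule cond4[OF assms])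
next
  fix n W p assume "D n W p"
  thus "T_diff UNIV D 0 n W (inv_into (Tsp D 0) (phi D 0) \<circ> p)" by (rule cond5[OF assms])
qed

end
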